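(* Let $\mathbf{C}$ be a small 2-category and $\mathbf{D}$ a 2-category with an enhanced factorization system $(\mathcal{E},\mathcal{M})$ such that: $(\mathcal{E},\mathcal{M})$ separates parallel pairs; every 1-cell in $\mathcal{E}$ is a 2-epimorphism and every 1-cell in $\mathcal{M}$ is a 2-monomorphism; and post-composition with 1-cells in $\mathcal{M}$ creates invertible 2-cells. Then $(\mathcal{E}^{\mathbf{C}},\mathcal{M}^{\mathbf{C}})$ is a rigid enhanced factorization system on $\mathbf{D}^{\mathbf{C}}$.
   Context: For a 2-category $\mathbf{A}$, an enhanced factorization system on $\mathbf{A}$ is a pair $(\mathcal{E},\mathcal{M})$ of classes of 1-cells of $\mathbf{A}$, each containing all isomorphisms, such that: (i) every 1-cell $\alpha$ factors (not necessarily uniquely) as $\alpha=\mu\circ\varepsilon$ with $\varepsilon\in\mathcal{E}$, $\mu\in\mathcal{M}$; (ii) given $\varepsilon\colon F\to F'$ in $\mathcal{E}$, $\mu\colon G\to G'$ in $\mathcal{M}$, 1-cells $\alpha\colon F\to G$, $\alpha'\colon F'\to G'$ and an invertible 2-cell $\Psi\colon \alpha'\varepsilon\Rightarrow\mu\alpha$, there is a unique pair $(\delta,\widetilde\Psi)$ with $\delta\colon F'\to G$ a 1-cell and $\widetilde\Psi\colon\alpha'\Rightarrow\mu\delta$ an invertible 2-cell such that $\delta\varepsilon=\alpha$ and the whiskering $\widetilde\Psi\varepsilon=\Psi$; moreover if $\Psi$ is an identity then $\mu\delta=\alpha'$ and $\widetilde\Psi$ is an identity; (iii) given $\varepsilon\colon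 F\to F'$ in $\mathcal{E}$, $\mu\colon G\to G'$ in $\mathcal{M}$, parallel 1-cells $\alpha_1,\alpha_2\colon F\to G$ and $\alpha_1',\alpha_2'\colon F'\to G'$ with $\alpha_i'\varepsilon=\mu\alpha_i$ ($i=1,2$), and 2-cells $\Phi\colon\alpha_1\Rightarrow\alpha_2$, $\Phi'\colon\alpha_1'\Rightarrow\alpha_2'$ with $\mu\Phi=\Phi'\varepsilon$, let $\delta_i\colon F'\to G$ be the unique 1-cells with $\delta_i\varepsilon=\alpha_i$ and $\mu\delta_i=\alpha_i'$ (from (ii) with identity 2-cell); then there is a unique 2-cell $\Delta\colon\delta_1\Rightarrow\delta_2$ with $\Delta\varepsilon=\Phi$ and $\mu\Delta=\Phi'$. It is rigid if moreover: for 1-cells $\mu\colon F\to G$ in $\mathcal{M}$ and $\alpha\colon G\to F$, if $\mu\alpha\cong\mathrm{id}_G$ (invertible 2-cell) then $\alpha\mu\cong\mathrm{id}_F$. $(\mathcal{E},\mathcal{M})$ separates parallel pairs if whenever $\alpha,\beta\colon F\to G$ are parallel 1-cells for which there exist $\varepsilon\in\mathcal{E}$ with target $F$ and $\alpha\varepsilon=\beta\varepsilon$, and $\mu\in\mathcal{M}$ with source $G$ and $\mu\alpha=\mu\beta$, then $\alpha=\beta$. A 1-cell $\varepsilon\colon F\to G$ is a 2-epimorphism if for all 1-cells $\beta,\beta'\colon G\to H$ and 2-cells $\Psi,\Psi'\colon\beta\Rightarrow\beta'$, $\Psi\varepsilon=\Psi'\varepsilon$ implies $\Psi=\Psi'$.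 A 1-cell $\mu\colon G\to H$ is a 2-monomorphism if for all 1-cells $\beta,\beta'\colon F\to G$ and 2-cells $\Psi,\Psi'\colon\beta\Rightarrow\beta'$, $\mu\Psi=\mu\Psi'$ implies $\Psi=\Psi'$. Post-composition with a 1-cell $\mu$ creates invertible 2-cells if for all parallel 1-cells $\alpha,\beta$ (composable with $\mu$) and every invertible 2-cell $\Psi\colon\mu\alpha\Rightarrow\mu\beta$ there is a unique invertible 2-cell $\widehat\Psi\colon\alpha\Rightarrow\beta$ with $\mu\widehat\Psi=\Psi$; post-composition with 1-cells in $\mathcal{M}$ creates invertible 2-cells if this holds for every $\mu\in\mathcal{M}$. $\mathbf{D}^{\mathbf{C}}$ is the 2-category of 2-functors $\mathbf{C}\to\mathbf{D}$, 2-natural transformations, and modifications. $\mathcal{E}^{\mathbf{C}}$ (resp. $\mathcal{M}^{\mathbf{C}}$) is the class of 2-natural transformations all of whose components lie in $\mathcal{E}$ (resp. $\mathcal{M}$). *)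

theory Defs
  imports "HOL-Library.FuncSet"
begin

section \<open>Strict 2-categories, presented by carriers and partial operations\<close>

record ('o,'m,'t) twocat =
  Obj   :: "'o set"
  Hom1  :: "'m set"
  src1  :: "'m \<Rightarrow> 'o"
  tgt1  :: "'m \<Rightarrow> 'o"
  comp1 :: "'m \<Rightarrow> 'm \<Rightarrow> 'm"   (* comp1 g f = g \<circ> f, defined when tgt1 f = src1 g *)
  id1   :: "'o \<Rightarrow> 'm"
  Hom2  :: "'t set"
  dom2  :: "'t \<Rightarrow> 'm"
  cod2  :: "'t \<Rightarrow> 'm"
  vcomp :: "'t \<Rightarrow> 't \<Rightarrow> 't"   (* vcomp b a = b \<cdot> a, defined when cod2 a = dom2 b *)
  hcomp :: "'t \<Rightarrow> 't \<Rightarrow> 't"   (* hcomp b a = b * a, a over A\<rightarrow>B, b over B\<rightarrow>C *)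
  id2   :: "'m \<Rightarrow> 't"

definition arr1 :: "('o,'m,'t,'x) twocat_scheme \<Rightarrow> 'm \<Rightarrow> 'o \<Rightarrow> 'o \<Rightarrow> bool" where
  "arr1 A f X Y \<longleftrightarrow> f \<in> Hom1 A \<and> src1 A f = X \<and> tgt1 A f = Y"

definition arr2 :: "('o,'m,'t,'x) twocat_scheme \<Rightarrow> 't \<Rightarrow> 'm \<Rightarrow> 'm \<Rightarrow> bool" where
  "arr2 A a f g \<longleftrightarrow> a \<in> Hom2 A \<and> dom2 A a = f \<and> cod2 A a = g"

definition lwhisk :: "('o,'m,'t,'x) twocat_scheme \<Rightarrow> 'm \<Rightarrow> 't \<Rightarrow> 't" where
  "lwhisk A m a = hcomp A (id2 A m) a"
definition rwhisk :: "('o,'m,'t,'x) twocat_scheme \<Rightarrow> 't \<Rightarrow> 'm \<Rightarrow> 't" where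
  "rwhisk A a e = hcomp A a (id2 A e)"

definition twocat :: "('o,'m,'t,'x) twocat_scheme \<Rightarrow> bool" where
  "twocat A \<longleftrightarrow>
    (\<forall>f\<in>Hom1 A. src1 A f \<in> Obj A \<and> tgt1 A f \<in> Obj A) \<and>
    (\<forall>X\<in>Obj A. arr1 A (id1 A X) X X) \<and>
    (\<forall>f g X Y Z. arr1 A f X Y \<longrightarrow> arr1 A g Y Z \<longrightarrow> arr1 A (comp1 A g f) X Z) \<and>
    (\<forall>f g h W X Y Z. arr1 A f W X \<longrightarrow> arr1 A g X Y \<longrightarrow> arr1 A h Y Z \<longrightarrow>
        comp1 A h (comp1 A g f) = comp1 A (comp1 A h g) f) \<and>
    (\<forall>f X Y. arr1 A f X Y \<longrightarrow> comp1 A f (id1 A X) = f \<and> comp1 A (id1 A Y) f = f) \<and>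
    (\<forall>a\<in>Hom2 A. dom2 A a \<in> Hom1 A \<and> cod2 A a \<in> Hom1 A \<and>
        src1 A (dom2 A a) = src1 A (cod2 A a) \<and> tgt1 A (dom2 A a) = tgt1 A (cod2 A a)) \<and>
    (\<forall>f\<in>Hom1 A. arr2 A (id2 A f) f f) \<and>
    (\<forall>a b f g h. arr2 A a f g \<longrightarrow> arr2 A b g h \<longrightarrow> arr2 A (vcomp A b a) f h) \<and>
    (\<forall>a b c f g h k. arr2 A a f g \<longrightarrow> arr2 A b g h \<longrightarrow> arr2 A c h k \<longrightarrow>
        vcomp A c (vcomp A b a) = vcomp A (vcomp A c b) a) \<and>
    (\<forall>a f g. arr2 A a f g \<longrightarrow> vcomp A a (id2 A f) = a \<and> vcomp A (id2 A g) a = a) \<and>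
    (\<forall>a b f f' g g' X Y Z. arr1 A f X Y \<longrightarrow> arr1 A g Y Z \<longrightarrow> arr2 A a f f' \<longrightarrow> arr2 A b g g' \<longrightarrow>
        arr2 A (hcomp A b a) (comp1 A g f) (comp1 A g' f')) \<and>
    (\<forall>a b c f f' g g' h h' W X Y Z. arr1 A f W X \<longrightarrow> arr1 A g X Y \<longrightarrow> arr1 A h Y Z \<longrightarrow>
        arr2 A a f f' \<longrightarrow> arr2 A b g g' \<longrightarrow> arr2 A c h h' \<longrightarrow>
        hcomp A c (hcomp A b a) = hcomp A (hcomp A c b) a) \<and>
    (\<forall>a f f' X Y. arr1 A f X Y \<longrightarrow> arr2 A a f f' \<longrightarrow>
        hcomp A a (id2 A (id1 A X)) = a \<and> hcomp A (id2 A (id1 A Y)) a = a) \<and>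
    (\<forall>f g X Y Z. arr1 A f X Y \<longrightarrow> arr1 A g Y Z \<longrightarrow>
        hcomp A (id2 A g) (id2 A f) = id2 A (comp1 A g f)) \<and>
    (\<forall>a a' b b' f f' f'' g g' g'' X Y Z. arr1 A f X Y \<longrightarrow> arr1 A g Y Z \<longrightarrow>
        arr2 A a f f' \<longrightarrow> arr2 A a' f' f'' \<longrightarrow> arr2 A b g g' \<longrightarrow> arr2 A b' g' g'' \<longrightarrow>
        hcomp A (vcomp A b' b) (vcomp A a' a) = vcomp A (hcomp A b' a') (hcomp A b a))"

type_synonym ('oc,'mc,'tc,'od,'md,'td) twofun =
  "('oc \<Rightarrow> 'od) \<times> ('mc \<Rightarrow> 'md) \<times> ('tc \<Rightarrow> 'td)"

definition twofunctor ::
  "('oc,'mc,'tc,'x) twocat_scheme \<Rightarrow> ('od,'md,'td,'y) twocat_scheme \<Rightarrow>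
   ('oc,'mc,'tc,'od,'md,'td) twofun \<Rightarrow> bool" where
  "twofunctor C D F \<longleftrightarrow> (case F of (F0, F1, F2) \<Rightarrow>
     F0 \<in> extensional (Obj C) \<and> F1 \<in> extensional (Hom1 C) \<and> F2 \<in> extensional (Hom2 C) \<and>
     (\<forall>X\<in>Obj C. F0 X \<in> Obj D) \<and>
     (\<forall>f X Y. arr1 C f X Y \<longrightarrow> arr1 D (F1 f) (F0 X) (F0 Y)) \<and>
     (\<forall>a f g. arr2 C a f g \<longrightarrow> arr2 D (F2 a) (F1 f) (F1 g)) \<and>
     (\<forall>X\<in>Obj C. F1 (id1 C X) = id1 D (F0 X)) \<and>
     (\<forall>f g X Y Z. arr1 C f X Y \<longrightarrow> arr1 C g Y Z \<longrightarrow> F1 (comp1 C g f) = comp1 D (F1 g) (F1 f)) \<and>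
     (\<forall>f\<in>Hom1 C. F2 (id2 C f) = id2 D (F1 f)) \<and>
     (\<forall>a b f g h. arr2 C a f g \<longrightarrow> arr2 C b g h \<longrightarrow> F2 (vcomp C b a) = vcomp D (F2 b) (F2 a)) \<and>
     (\<forall>a b f f' g g' X Y Z. arr1 C f X Y \<longrightarrow> arr1 C g Y Z \<longrightarrow> arr2 C a f f' \<longrightarrow> arr2 C b g g' \<longrightarrow>
        F2 (hcomp C b a) = hcomp D (F2 b) (F2 a)))"

type_synonym ('oc,'mc,'tc,'od,'md,'td) twonat =
  "('oc,'mc,'tc,'od,'md,'td) twofun \<times> ('oc,'mc,'tc,'od,'md,'td) twofun \<times> ('oc \<Rightarrow> 'md)"

type_synonym ('oc,'mc,'tc,'od,'md,'td) modif =
  "('oc,'mc,'tc,'od,'md,'td) twonat \<times> ('oc,'mc,'tc,'od,'md,'td) twonat \<times> ('oc \<Rightarrow> 'td)"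

definition F0 where "F0 F = fst F"
definition F1 where "F1 F = fst (snd F)"
definition F2 where "F2 F = snd (snd F)"

definition nsrc where "nsrc a = fst a"
definition ntgt where "ntgt a = fst (snd a)"
definition ncmp where "ncmp a = snd (snd a)"

definition twonatural ::
  "('oc,'mc,'tc,'x) twocat_scheme \<Rightarrow> ('od,'md,'td,'y) twocat_scheme \<Rightarrow>
   ('oc,'mc,'tc,'od,'md,'td) twonat \<Rightarrow> bool" where
  "twonatural C D \<alpha> \<longleftrightarrow> (let F = nsrc \<alpha>; G = ntgt \<alpha>; a = ncmp \<alpha> in
     twofunctor C D F \<and> twofunctor C D G \<and> a \<in> extensional (Obj C) \<and>
     (\<forall>X\<in>Obj C. arr1 D (a X) (F0 F X) (F0 G X)) \<and>
     (\<forall>f X Y. arr1 C f X Y \<longrightarrow> comp1 D (F1 G f) (a X) = comp1 D (a Y) (F1 F f)) \<and>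
     (\<forall>t f g X Y. arr1 C f X Y \<longrightarrow> arr2 C t f g \<longrightarrow>
        rwhisk D (F2 G t) (a X) = lwhisk D (a Y) (F2 F t)))"

definition modification ::
  "('oc,'mc,'tc,'x) twocat_scheme \<Rightarrow> ('od,'md,'td,'y) twocat_scheme \<Rightarrow>
   ('oc,'mc,'tc,'od,'md,'td) modif \<Rightarrow> bool" where
  "modification C D \<Gamma> \<longleftrightarrow> (let \<alpha> = nsrc \<Gamma>; \<beta> = ntgt \<Gamma>; g = ncmp \<Gamma> in
     twonatural C D \<alpha> \<and> twonatural C D \<beta> \<and> nsrc \<alpha> = nsrc \<beta> \<and> ntgt \<alpha> = ntgt \<beta> \<and>
     g \<in> extensional (Obj C) \<and>
     (\<forall>X\<in>Obj C. arr2 D (g X) (ncmp \<alpha> X) (ncmp \<beta> X)) \<and>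
     (\<forall>f X Y. arr1 C f X Y \<longrightarrow>
        lwhisk D (F1 (ntgt \<alpha>) f) (g X) = rwhisk D (g Y) (F1 (nsrc \<alpha>) f)))"

definition funcat ::
  "('oc,'mc,'tc,'x) twocat_scheme \<Rightarrow> ('od,'md,'td,'y) twocat_scheme \<Rightarrow>
   (('oc,'mc,'tc,'od,'md,'td) twofun, ('oc,'mc,'tc,'od,'md,'td) twonat,
    ('oc,'mc,'tc,'od,'md,'td) modif) twocat" where
  "funcat C D = \<lparr>
     Obj = {F. twofunctor C D F},
     Hom1 = {\<alpha>. twonatural C D \<alpha>},
     src1 = nsrc,
     tgt1 = ntgt,
     comp1 = (\<lambda>\<beta> \<alpha>. (nsrc \<alpha>, ntgt \<beta>, \<lambda>X\<in>Obj C. comp1 D (ncmp \<beta> X) (ncmp \<alpha> X))),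
     id1 = (\<lambda>F. (F, F, \<lambda>X\<in>Obj C. id1 D (F0 F X))),
     Hom2 = {\<Gamma>. modification C D \<Gamma>},
     dom2 = nsrc,
     cod2 = ntgt,
     vcomp = (\<lambda>\<Delta> \<Gamma>. (nsrc \<Gamma>, ntgt \<Delta>, \<lambda>X\<in>Obj C. vcomp D (ncmp \<Delta> X) (ncmp \<Gamma> X))),
     hcomp = (\<lambda>\<Delta> \<Gamma>.
        ((nsrc (nsrc \<Gamma>), ntgt (nsrc \<Delta>), \<lambda>X\<in>Obj C. comp1 D (ncmp (nsrc \<Delta>) X) (ncmp (nsrc \<Gamma>) X)),
         (nsrc (ntgt \<Gamma>), ntgt (ntgt \<Delta>), \<lambda>X\<in>Obj C. comp1 D (ncmp (ntgt \<Delta>) X) (ncmp (ntgt \<Gamma>) X)),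
         \<lambda>X\<in>Obj C. hcomp D (ncmp \<Delta> X) (ncmp \<Gamma> X))),
     id2 = (\<lambda>\<alpha>. (\<alpha>, \<alpha>, \<lambda>X\<in>Obj C. id2 D (ncmp \<alpha> X)))
   \<rparr>"

definition pointwise ::
  "('oc,'mc,'tc,'x) twocat_scheme \<Rightarrow> ('od,'md,'td,'y) twocat_scheme \<Rightarrow> 'md set \<Rightarrow>
   ('oc,'mc,'tc,'od,'md,'td) twonat set" where
  "pointwise C D K = {\<alpha>. twonatural C D \<alpha> \<and> (\<forall>X\<in>Obj C. ncmp \<alpha> X \<in> K)}"

definition iso1 :: "('o,'m,'t,'x) twocat_scheme \<Rightarrow> 'm \<Rightarrow> bool" where
  "iso1 A f \<longleftrightarrow> f \<in> Hom1 A \<and> (\<exists>g. arr1 A g (tgt1 A f) (src1 A f) \<and>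
      comp1 A g f = id1 A (src1 A f) \<and> comp1 A f g = id1 A (tgt1 A f))"

definition inv2 :: "('o,'m,'t,'x) twocat_scheme \<Rightarrow> 't \<Rightarrow> bool" where
  "inv2 A a \<longleftrightarrow> a \<in> Hom2 A \<and> (\<exists>b. arr2 A b (cod2 A a) (dom2 A a) \<and>
      vcomp A b a = id2 A (dom2 A a) \<and> vcomp A a b = id2 A (cod2 A a))"

definition iso2cells :: "('o,'m,'t,'x) twocat_scheme \<Rightarrow> 'm \<Rightarrow> 'm \<Rightarrow> bool" where
  "iso2cells A f g \<longleftrightarrow> (\<exists>a. arr2 A a f g \<and> inv2 A a)"

definition enhanced_fs :: "('o,'m,'t,'x) twocat_scheme \<Rightarrow> 'm set \<Rightarrow> 'm set \<Rightarrow> bool" where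
  "enhanced_fs A E M \<longleftrightarrow>
    E \<subseteq> Hom1 A \<and> M \<subseteq> Hom1 A \<and>
    {f. iso1 A f} \<subseteq> E \<and> {f. iso1 A f} \<subseteq> M \<and>
    \<comment> \<open>(i)\<close>
    (\<forall>\<alpha>\<in>Hom1 A. \<exists>\<epsilon>\<in>E. \<exists>\<mu>\<in>M. tgt1 A \<epsilon> = src1 A \<mu> \<and> \<alpha> = comp1 A \<mu> \<epsilon>) \<and>
    \<comment> \<open>(ii)\<close>
    (\<forall>\<epsilon>\<in>E. \<forall>\<mu>\<in>M. \<forall>F F' G G' \<alpha> \<alpha>' \<Psi>.
       arr1 A \<epsilon> F F' \<longrightarrow> arr1 A \<mu> G G' \<longrightarrow> arr1 A \<alpha> F G \<longrightarrow> arr1 A \<alpha>' F' G' \<longrightarrow>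
       arr2 A \<Psi> (comp1 A \<alpha>' \<epsilon>) (comp1 A \<mu> \<alpha>) \<longrightarrow> inv2 A \<Psi> \<longrightarrow>
       (\<exists>!(\<delta>, \<Psi>t). arr1 A \<delta> F' G \<and> arr2 A \<Psi>t \<alpha>' (comp1 A \<mu> \<delta>) \<and> inv2 A \<Psi>t \<and>
                     comp1 A \<delta> \<epsilon> = \<alpha> \<and> rwhisk A \<Psi>t \<epsilon> = \<Psi>) \<and>
       (\<Psi> = id2 A (comp1 A \<alpha>' \<epsilon>) \<longrightarrow>
          (\<forall>\<delta> \<Psi>t. arr1 A \<delta> F' G \<and> arr2 A \<Psi>t \<alpha>' (comp1 A \<mu> \<delta>) \<and> inv2 A \<Psi>t \<and>
                     comp1 A \<delta> \<epsilon> = \<alpha> \<and> rwhisk A \<Psi>t \<epsilon> = \<Psi> \<longrightarrow>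
                     comp1 A \<mu> \<delta> = \<alpha>' \<and> \<Psi>t = id2 A \<alpha>'))) \<and>
    \<comment> \<open>(iii)\<close>
    (\<forall>\<epsilon>\<in>E. \<forall>\<mu>\<in>M. \<forall>F F' G G' \<alpha>1 \<alpha>2 \<alpha>1' \<alpha>2' \<Phi> \<Phi>' \<delta>1 \<delta>2.
       arr1 A \<epsilon> F F' \<longrightarrow> arr1 A \<mu> G G' \<longrightarrow>
       arr1 A \<alpha>1 F G \<longrightarrow> arr1 A \<alpha>2 F G \<longrightarrow> arr1 A \<alpha>1' F' G' \<longrightarrow> arr1 A \<alpha>2' F' G' \<longrightarrow>
       comp1 A \<alpha>1' \<epsilon> = comp1 A \<mu> \<alpha>1 \<longrightarrow> comp1 A \<alpha>2' \<epsilon> = comp1 A \<mu> \<alpha>2 \<longrightarrow>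
       arr2 A \<Phi> \<alpha>1 \<alpha>2 \<longrightarrow> arr2 A \<Phi>' \<alpha>1' \<alpha>2' \<longrightarrow> lwhisk A \<mu> \<Phi> = rwhisk A \<Phi>' \<epsilon> \<longrightarrow>
       arr1 A \<delta>1 F' G \<longrightarrow> comp1 A \<delta>1 \<epsilon> = \<alpha>1 \<longrightarrow> comp1 A \<mu> \<delta>1 = \<alpha>1' \<longrightarrow>
       arr1 A \<delta>2 F' G \<longrightarrow> comp1 A \<delta>2 \<epsilon> = \<alpha>2 \<longrightarrow> comp1 A \<mu> \<delta>2 = \<alpha>2' \<longrightarrow>
       (\<exists>!\<Delta>. arr2 A \<Delta> \<delta>1 \<delta>2 \<and> rwhisk A \<Delta> \<epsilon> = \<Phi> \<and> lwhisk A \<mu> \<Delta> = \<Phi>'))"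

definition rigid :: "('o,'m,'t,'x) twocat_scheme \<Rightarrow> 'm set \<Rightarrow> 'm set \<Rightarrow> bool" where
  "rigid A E M \<longleftrightarrow> (\<forall>\<mu>\<in>M. \<forall>\<alpha> F G. arr1 A \<mu> F G \<longrightarrow> arr1 A \<alpha> G F \<longrightarrow>
      iso2cells A (comp1 A \<mu> \<alpha>) (id1 A G) \<longrightarrow> iso2cells A (comp1 A \<alpha> \<mu>) (id1 A F))"

definition rigid_enhanced_fs :: "('o,'m,'t,'x) twocat_scheme \<Rightarrow> 'm set \<Rightarrow> 'm set \<Rightarrow> bool" where
  "rigid_enhanced_fs A E M \<longleftrightarrow> enhanced_fs A E M \<and> rigid A E M"

definition separates_parallel_pairs :: "('o,'m,'t,'x) twocat_scheme \<Rightarrow> 'm set \<Rightarrow> 'm set \<Rightarrow> bool" where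
  "separates_parallel_pairs A E M \<longleftrightarrow> (\<forall>\<alpha> \<beta> F G. arr1 A \<alpha> F G \<longrightarrow> arr1 A \<beta> F G \<longrightarrow>
      (\<exists>\<epsilon>\<in>E. tgt1 A \<epsilon> = F \<and> comp1 A \<alpha> \<epsilon> = comp1 A \<beta> \<epsilon>) \<longrightarrow>
      (\<exists>\<mu>\<in>M. src1 A \<mu> = G \<and> comp1 A \<mu> \<alpha> = comp1 A \<mu> \<beta>) \<longrightarrow> \<alpha> = \<beta>)"

definition two_epi :: "('o,'m,'t,'x) twocat_scheme \<Rightarrow> 'm \<Rightarrow> bool" where
  "two_epi A e \<longleftrightarrow> (\<forall>b b' H \<Psi> \<Psi>'. arr1 A b (tgt1 A e) H \<longrightarrow> arr1 A b' (tgt1 A e) H \<longrightarrow>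
      arr2 A \<Psi> b b' \<longrightarrow> arr2 A \<Psi>' b b' \<longrightarrow> rwhisk A \<Psi> e = rwhisk A \<Psi>' e \<longrightarrow> \<Psi> = \<Psi>')"

definition two_mono :: "('o,'m,'t,'x) twocat_scheme \<Rightarrow> 'm \<Rightarrow> bool" where
  "two_mono A m \<longleftrightarrow> (\<forall>b b' F \<Psi> \<Psi>'. arr1 A b F (src1 A m) \<longrightarrow> arr1 A b' F (src1 A m) \<longrightarrow>
      arr2 A \<Psi> b b' \<longrightarrow> arr2 A \<Psi>' b b' \<longrightarrow> lwhisk A m \<Psi> = lwhisk A m \<Psi>' \<longrightarrow> \<Psi> = \<Psi>')"

definition creates_inv2 :: "('o,'m,'t,'x) twocat_scheme \<Rightarrow> 'm \<Rightarrow> bool" where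
  "creates_inv2 A m \<longleftrightarrow> (\<forall>a b F \<Psi>. arr1 A a F (src1 A m) \<longrightarrow> arr1 A b F (src1 A m) \<longrightarrow>
      arr2 A \<Psi> (comp1 A m a) (comp1 A m b) \<longrightarrow> inv2 A \<Psi> \<longrightarrow>
      (\<exists>!\<Psi>h. arr2 A \<Psi>h a b \<and> inv2 A \<Psi>h \<and> lwhisk A m \<Psi>h = \<Psi>))"

end

theory Submission
  imports Defs
begin



locale tc =
  fixes A :: "('o,'m,'t,'x) twocat_scheme"
  assumes tc: "twocat A"
begin

lemmas TC = tc[unfolded twocat_def]
lemmas c1 = TC[THEN conjunct1]
lemmas c2 = TC[THEN conjunct2, THEN conjunct1]
lemmas c3 = TC[THEN conjunct2, THEN conjunct2, THEN conjunct1]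
lemmas c4 = TC[THEN conjunct2, THEN conjunct2, THEN conjunct2, THEN conjunct1]
lemmas c5 = TC[THEN conjunct2, THEN conjunct2, THEN conjunct2, THEN conjunct2, THEN conjunct1]
lemmas c6 = TC[THEN conjunct2, THEN conjunct2, THEN conjunct2, THEN conjunct2, THEN conjunct2, THEN conjunct1]
lemmas c7 = TC[THEN conjunct2, THEN conjunct2, THEN conjunct2, THEN conjunct2, THEN conjunct2, THEN conjunct2, THEN conjunct1]
lemmas c8 = TC[THEN conjunct2, THEN conjunct2, THEN conjunct2, THEN conjunct2, THEN conjunct2, THEN conjunct2, THEN conjunct2, THEN conjunct1]
lemmas c9 = TC[THEN conjunct2, THEN conjunct2, THEN conjunct2, THEN conjunct2, THEN conjunct2, THEN conjunct2, THEN conjunct2, THEN conjunct2, THEN conjunct1]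
lemmas c10 = TC[THEN conjunct2, THEN conjunct2, THEN conjunct2, THEN conjunct2, THEN conjunct2, THEN conjunct2, THEN conjunct2, THEN conjunct2, THEN conjunct2, THEN conjunct1]
lemmas c11 = TC[THEN conjunct2, THEN conjunct2, THEN conjunct2, THEN conjunct2, THEN conjunct2, THEN conjunct2, THEN conjunct2, THEN conjunct2, THEN conjunct2, THEN conjunct2, THEN conjunct1]
lemmas c12 = TC[THEN conjunct2, THEN conjunct2, THEN conjunct2, THEN conjunct2, THEN conjunct2, THEN conjunct2, THEN conjunct2, THEN conjunct2, THEN conjunct2, THEN conjunct2, THEN conjunct2, THEN conjunct1]
lemmas c13 = TC[THEN conjunct2, THEN conjunct2, THEN conjunct2, THEN conjunct2, THEN conjunct2, THEN conjunct2, THEN conjunct2, THEN conjunct2, THEN conjunct2, THEN conjunct2, THEN conjunct2, THEN conjunct2, THEN conjunct1]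
lemmas c14 = TC[THEN conjunct2, THEN conjunct2, THEN conjunct2, THEN conjunct2, THEN conjunct2, THEN conjunct2, THEN conjunct2, THEN conjunct2, THEN conjunct2, THEN conjunct2, THEN conjunct2, THEN conjunct2, THEN conjunct2, THEN conjunct1]
lemmas c15 = TC[THEN conjunct2, THEN conjunct2, THEN conjunct2, THEN conjunct2, THEN conjunct2, THEN conjunct2, THEN conjunct2, THEN conjunct2, THEN conjunct2, THEN conjunct2, THEN conjunct2, THEN conjunct2, THEN conjunct2, THEN conjunct2]

lemma arr1_Hom: "arr1 A f X Y \<Longrightarrow> f \<in> Hom1 A" by (simp add: arr1_def)
lemma Hom_arr1: "f \<in> Hom1 A \<Longrightarrow> arr1 A f (src1 A f) (tgt1 A f)" by (simp add: arr1_def)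
lemma arr1_objs: "arr1 A f X Y \<Longrightarrow> X \<in> Obj A \<and> Y \<in> Obj A"
  using c1 unfolding arr1_def by blast
lemma id1_arr: "X \<in> Obj A \<Longrightarrow> arr1 A (id1 A X) X X"
  using c2  by blast
lemma comp_arr: "arr1 A f X Y \<Longrightarrow> arr1 A g Y Z \<Longrightarrow> arr1 A (comp1 A g f) X Z"
  using c3  by blast
lemma comp_assoc: "arr1 A f W X \<Longrightarrow> arr1 A g X Y \<Longrightarrow> arr1 A h Y Z \<Longrightarrow>
   comp1 A h (comp1 A g f) = comp1 A (comp1 A h g) f"
  using c4  by blast
lemma comp_id_r: "arr1 A f X Y \<Longrightarrow> comp1 A f (id1 A X) = f"
  using c5  by blast
lemma comp_id_l: "arr1 A f X Y \<Longrightarrow> comp1 A (id1 A Y) f = f"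
  using c5  by blast
lemma arr2_Hom: "arr2 A a f g \<Longrightarrow> f \<in> Hom1 A \<and> g \<in> Hom1 A"
  using c6 unfolding arr2_def by blast
lemma arr2_arr1: "arr2 A a f g \<Longrightarrow> arr1 A f X Y \<Longrightarrow> arr1 A g X Y"
  using c6 unfolding arr2_def arr1_def by metis
lemma arr2_arr1': "arr2 A a f g \<Longrightarrow> arr1 A g X Y \<Longrightarrow> arr1 A f X Y"
  using c6 unfolding arr2_def arr1_def by metis
lemma id2_arr: "arr1 A f X Y \<Longrightarrow> arr2 A (id2 A f) f f"
  using c7 unfolding arr1_def by blast
lemma vcomp_arr: "arr2 A a f g \<Longrightarrow> arr2 A b g h \<Longrightarrow> arr2 A (vcomp A b a) f h"
  using c8  by blast
lemma vcomp_assoc: "arr2 A a f g \<Longrightarrow> arr2 A b g h \<Longrightarrow> arr2 A c h k \<Longrightarrow>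
        vcomp A c (vcomp A b a) = vcomp A (vcomp A c b) a"
  using c9  by blast
lemma vcomp_id_r: "arr2 A a f g \<Longrightarrow> vcomp A a (id2 A f) = a"
  using c10  by blast
lemma vcomp_id_l: "arr2 A a f g \<Longrightarrow> vcomp A (id2 A g) a = a"
  using c10  by blast
lemma hcomp_arr: "arr1 A f X Y \<Longrightarrow> arr1 A g Y Z \<Longrightarrow> arr2 A a f f' \<Longrightarrow> arr2 A b g g' \<Longrightarrow>
        arr2 A (hcomp A b a) (comp1 A g f) (comp1 A g' f')"
  using c11  by blast
lemma hcomp_assoc: "arr1 A f W X \<Longrightarrow> arr1 A g X Y \<Longrightarrow> arr1 A h Y Z \<Longrightarrow>
        arr2 A a f f' \<Longrightarrow> arr2 A b g g' \<Longrightarrow> arr2 A c h h' \<Longrightarrow>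
        hcomp A c (hcomp A b a) = hcomp A (hcomp A c b) a"
  using c12  by blast
lemma hcomp_unit_r: "arr1 A f X Y \<Longrightarrow> arr2 A a f f' \<Longrightarrow> hcomp A a (id2 A (id1 A X)) = a"
  using c13  by blast
lemma hcomp_unit_l: "arr1 A f X Y \<Longrightarrow> arr2 A a f f' \<Longrightarrow> hcomp A (id2 A (id1 A Y)) a = a"
  using c13  by blast
lemma hcomp_id2: "arr1 A f X Y \<Longrightarrow> arr1 A g Y Z \<Longrightarrow>
        hcomp A (id2 A g) (id2 A f) = id2 A (comp1 A g f)"
  using c14  by blast
lemma interchange: "arr1 A f X Y \<Longrightarrow> arr1 A g Y Z \<Longrightarrow>
        arr2 A a f f' \<Longrightarrow> arr2 A a' f' f'' \<Longrightarrow> arr2 A b g g' \<Longrightarrow> arr2 A b' g' g'' \<Longrightarrow>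
        hcomp A (vcomp A b' b) (vcomp A a' a) = vcomp A (hcomp A b' a') (hcomp A b a)"
  using c15  by blast

lemma rw_arr: "arr1 A e X Y \<Longrightarrow> arr1 A f Y Z \<Longrightarrow> arr2 A a f g \<Longrightarrow>
   arr2 A (rwhisk A a e) (comp1 A f e) (comp1 A g e)"
  unfolding rwhisk_def by (rule hcomp_arr, assumption+, rule id2_arr, assumption+)
lemma lw_arr: "arr1 A f X Y \<Longrightarrow> arr1 A m Y Z \<Longrightarrow> arr2 A a f g \<Longrightarrow>
   arr2 A (lwhisk A m a) (comp1 A m f) (comp1 A m g)"
  unfolding lwhisk_def by (rule hcomp_arr, assumption+, rule id2_arr, assumption+)
lemma rw_rw: "arr1 A e1 W X \<Longrightarrow> arr1 A e2 X Y \<Longrightarrow> arr1 A f Y Z \<Longrightarrow> arr2 A a f g \<Longrightarrow>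
   rwhisk A (rwhisk A a e2) e1 = rwhisk A a (comp1 A e2 e1)"
  unfolding rwhisk_def
  by (simp add: hcomp_assoc[of e1 W X e2 Y f Z "id2 A e1" e1 "id2 A e2" e2 a g, symmetric] id2_arr hcomp_id2)
lemma lw_lw: "arr1 A f X Y \<Longrightarrow> arr1 A m1 Y Z \<Longrightarrow> arr1 A m2 Z W \<Longrightarrow> arr2 A a f g \<Longrightarrow>
   lwhisk A m2 (lwhisk A m1 a) = lwhisk A (comp1 A m2 m1) a"
  unfolding lwhisk_def
  by (simp add: hcomp_assoc[of f X Y m1 Z m2 W a g "id2 A m1" m1 "id2 A m2" m2] id2_arr hcomp_id2)
lemma lw_rw: "arr1 A e W X \<Longrightarrow> arr1 A f X Y \<Longrightarrow> arr1 A m Y Z \<Longrightarrow> arr2 A a f g \<Longrightarrow>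
   lwhisk A m (rwhisk A a e) = rwhisk A (lwhisk A m a) e"
  unfolding lwhisk_def rwhisk_def
  by (simp add: hcomp_assoc[of e W X f Y m Z "id2 A e" e a g "id2 A m" m] id2_arr)
lemma rw_id: "arr1 A e X Y \<Longrightarrow> arr1 A f Y Z \<Longrightarrow> rwhisk A (id2 A f) e = id2 A (comp1 A f e)"
  unfolding rwhisk_def by (rule hcomp_id2)
lemma lw_id: "arr1 A f X Y \<Longrightarrow> arr1 A m Y Z \<Longrightarrow> lwhisk A m (id2 A f) = id2 A (comp1 A m f)"
  unfolding lwhisk_def by (rule hcomp_id2)
lemma rw_vcomp: "arr1 A e X Y \<Longrightarrow> arr1 A f Y Z \<Longrightarrow> arr2 A a f g \<Longrightarrow> arr2 A b g h \<Longrightarrow>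
   rwhisk A (vcomp A b a) e = vcomp A (rwhisk A b e) (rwhisk A a e)"
  unfolding rwhisk_def
  using interchange[of e X Y f Z "id2 A e" e "id2 A e" e a g b h]
  by (simp add: id2_arr vcomp_id_r[of "id2 A e" e e])
lemma lw_vcomp: "arr1 A f X Y \<Longrightarrow> arr1 A m Y Z \<Longrightarrow> arr2 A a f g \<Longrightarrow> arr2 A b g h \<Longrightarrow>
   lwhisk A m (vcomp A b a) = vcomp A (lwhisk A m b) (lwhisk A m a)"
  unfolding lwhisk_def
  using interchange[of f X Y m Z a g b h "id2 A m" m "id2 A m" m]
  by (simp add: id2_arr vcomp_id_r[of "id2 A m" m m])
lemma rw_idobj: "arr1 A f X Y \<Longrightarrow> arr2 A a f g \<Longrightarrow> rwhisk A a (id1 A X) = a"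
  unfolding rwhisk_def by (rule hcomp_unit_r)
lemma lw_idobj: "arr1 A f X Y \<Longrightarrow> arr2 A a f g \<Longrightarrow> lwhisk A (id1 A Y) a = a"
  unfolding lwhisk_def by (rule hcomp_unit_l)
lemma hcomp_rw: "arr1 A e W X \<Longrightarrow> arr1 A f X Y \<Longrightarrow> arr1 A g Y Z \<Longrightarrow> arr2 A a f f' \<Longrightarrow> arr2 A b g g' \<Longrightarrow>
   hcomp A b (rwhisk A a e) = rwhisk A (hcomp A b a) e"
  unfolding rwhisk_def
  by (simp add: hcomp_assoc[of e W X f Y g Z "id2 A e" e a f' b g'] id2_arr)
lemma hcomp_lw: "arr1 A f W X \<Longrightarrow> arr1 A g X Y \<Longrightarrow> arr1 A m Y Z \<Longrightarrow> arr2 A a f f' \<Longrightarrow> arr2 A b g g' \<Longrightarrow>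
   hcomp A (lwhisk A m b) a = lwhisk A m (hcomp A b a)"
  unfolding lwhisk_def
  by (simp add: hcomp_assoc[of f W X g Y m Z a f' b g' "id2 A m" m] id2_arr)
lemma hcomp_rw_lw: "arr1 A f W X \<Longrightarrow> arr1 A e X Y \<Longrightarrow> arr1 A g Y Z \<Longrightarrow> arr2 A a f f' \<Longrightarrow> arr2 A b g g' \<Longrightarrow>
   hcomp A (rwhisk A b e) a = hcomp A b (lwhisk A e a)"
  unfolding lwhisk_def rwhisk_def
  by (simp add: hcomp_assoc[of f W X e Y g Z a f' "id2 A e" e b g'] id2_arr)

lemma inv2_iff: "arr2 A a f g \<Longrightarrow> inv2 A a \<longleftrightarrow>
   (\<exists>b. arr2 A b g f \<and> vcomp A b a = id2 A f \<and> vcomp A a b = id2 A g)"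
  unfolding inv2_def arr2_def by auto
lemma inv_unique: "arr2 A a f g \<Longrightarrow> arr2 A b g f \<Longrightarrow> arr2 A b' g f \<Longrightarrow>
   vcomp A b a = id2 A f \<Longrightarrow> vcomp A a b' = id2 A g \<Longrightarrow> b = b'"
proof -
  assume a: "arr2 A a f g" and b: "arr2 A b g f" and b': "arr2 A b' g f"
    and 1: "vcomp A b a = id2 A f" and 2: "vcomp A a b' = id2 A g"
  have "b = vcomp A b (vcomp A a b')" using 2 vcomp_id_r[OF b] by simp
  also have "\<dots> = vcomp A (vcomp A b a) b'" by (rule vcomp_assoc[OF b' a b])
  also have "\<dots> = b'" using 1 vcomp_id_l[OF b'] by simp
  finally show ?thesis .
qed
lemma id2_inv: "arr1 A f X Y \<Longrightarrow> inv2 A (id2 A f)"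
proof -
  assume f: "arr1 A f X Y"
  have i: "arr2 A (id2 A f) f f" using id2_arr[OF f] .
  show ?thesis unfolding inv2_iff[OF i] using i vcomp_id_r[OF i] by blast
qed
lemma rw_inv: "arr1 A e X Y \<Longrightarrow> arr1 A f Y Z \<Longrightarrow> arr2 A a f g \<Longrightarrow> inv2 A a \<Longrightarrow> inv2 A (rwhisk A a e)"
proof -
  assume e: "arr1 A e X Y" and f: "arr1 A f Y Z" and a: "arr2 A a f g" and i: "inv2 A a"
  then obtain b where b: "arr2 A b g f" "vcomp A b a = id2 A f" "vcomp A a b = id2 A g"
    using inv2_iff by blast
  have g: "arr1 A g Y Z" using a f arr2_arr1 by blast
  have 1: "vcomp A (rwhisk A b e) (rwhisk A a e) = id2 A (comp1 A f e)"
    using rw_vcomp[OF e f a b(1)] b(2) rw_id[OF e f] by simp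
  have 2: "vcomp A (rwhisk A a e) (rwhisk A b e) = id2 A (comp1 A g e)"
    using rw_vcomp[OF e g b(1) a] b(3) rw_id[OF e g] by simp
  show ?thesis
    unfolding inv2_iff[OF rw_arr[OF e f a]]
    using 1 2 rw_arr[OF e g b(1)] by blast
qed
lemma lw_inv: "arr1 A f X Y \<Longrightarrow> arr1 A m Y Z \<Longrightarrow> arr2 A a f g \<Longrightarrow> inv2 A a \<Longrightarrow> inv2 A (lwhisk A m a)"
proof -
  assume f: "arr1 A f X Y" and m: "arr1 A m Y Z" and a: "arr2 A a f g" and i: "inv2 A a"
  then obtain b where b: "arr2 A b g f" "vcomp A b a = id2 A f" "vcomp A a b = id2 A g"
    using inv2_iff by blast
  have g: "arr1 A g X Y" using a f arr2_arr1 by blast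
  have 1: "vcomp A (lwhisk A m b) (lwhisk A m a) = id2 A (comp1 A m f)"
    using lw_vcomp[OF f m a b(1)] b(2) lw_id[OF f m] by simp
  have 2: "vcomp A (lwhisk A m a) (lwhisk A m b) = id2 A (comp1 A m g)"
    using lw_vcomp[OF g m b(1) a] b(3) lw_id[OF g m] by simp
  show ?thesis
    unfolding inv2_iff[OF lw_arr[OF f m a]]
    using 1 2 lw_arr[OF g m b(1)] by blast
qed

end



lemma nsrc_simp[simp]: "nsrc (a,b,c) = a" and ntgt_simp[simp]: "ntgt (a,b,c) = b"
  and ncmp_simp[simp]: "ncmp (a,b,c) = c"
  by (simp_all add: nsrc_def ntgt_def ncmp_def)

lemma triple_eq: "nsrc x = nsrc y \<Longrightarrow> ntgt x = ntgt y \<Longrightarrow> ncmp x = ncmp y \<Longrightarrow> x = y"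
  by (cases x, cases y) (simp add: nsrc_def ntgt_def ncmp_def)

lemma fc_simps[simp]:
  "Obj (funcat C D) = {F. twofunctor C D F}"
  "Hom1 (funcat C D) = {a. twonatural C D a}"
  "Hom2 (funcat C D) = {G. modification C D G}"
  "src1 (funcat C D) = nsrc" "tgt1 (funcat C D) = ntgt"
  "dom2 (funcat C D) = nsrc" "cod2 (funcat C D) = ntgt"
  "comp1 (funcat C D) b a = (nsrc a, ntgt b, \<lambda>X\<in>Obj C. comp1 D (ncmp b X) (ncmp a X))"
  "id1 (funcat C D) F = (F, F, \<lambda>X\<in>Obj C. id1 D (F0 F X))"
  "vcomp (funcat C D) G2 G1 = (nsrc G1, ntgt G2, \<lambda>X\<in>Obj C. vcomp D (ncmp G2 X) (ncmp G1 X))"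
  "id2 (funcat C D) a2 = (a2, a2, \<lambda>X\<in>Obj C. id2 D (ncmp a2 X))"
  by (simp_all add: funcat_def)

lemma fc_rw[simp]: "rwhisk (funcat C D) G e =
   (comp1 (funcat C D) (nsrc G) e, comp1 (funcat C D) (ntgt G) e, \<lambda>X\<in>Obj C. rwhisk D (ncmp G X) (ncmp e X))"
  unfolding rwhisk_def lwhisk_def by (auto simp: funcat_def intro!: restrict_ext)
lemma fc_lw[simp]: "lwhisk (funcat C D) m G =
   (comp1 (funcat C D) m (nsrc G), comp1 (funcat C D) m (ntgt G), \<lambda>X\<in>Obj C. lwhisk D (ncmp m X) (ncmp G X))"
  unfolding rwhisk_def lwhisk_def by (auto simp: funcat_def intro!: restrict_ext)

lemma fc_arr1: "arr1 (funcat C D) a F G \<longleftrightarrow> twonatural C D a \<and> nsrc a = F \<and> ntgt a = G"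
  by (simp add: arr1_def)
lemma fc_arr2: "arr2 (funcat C D) G a b \<longleftrightarrow> modification C D G \<and> nsrc G = a \<and> ntgt G = b"
  by (simp add: arr2_def)

lemma twofunctor_iff: "twofunctor C D F \<longleftrightarrow>
     F0 F \<in> extensional (Obj C) \<and> F1 F \<in> extensional (Hom1 C) \<and> F2 F \<in> extensional (Hom2 C) \<and>
     (\<forall>X\<in>Obj C. F0 F X \<in> Obj D) \<and>
     (\<forall>f X Y. arr1 C f X Y \<longrightarrow> arr1 D (F1 F f) (F0 F X) (F0 F Y)) \<and>
     (\<forall>a f g. arr2 C a f g \<longrightarrow> arr2 D (F2 F a) (F1 F f) (F1 F g)) \<and>
     (\<forall>X\<in>Obj C. F1 F (id1 C X) = id1 D (F0 F X)) \<and>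
     (\<forall>f g X Y Z. arr1 C f X Y \<longrightarrow> arr1 C g Y Z \<longrightarrow> F1 F (comp1 C g f) = comp1 D (F1 F g) (F1 F f)) \<and>
     (\<forall>f\<in>Hom1 C. F2 F (id2 C f) = id2 D (F1 F f)) \<and>
     (\<forall>a b f g h. arr2 C a f g \<longrightarrow> arr2 C b g h \<longrightarrow> F2 F (vcomp C b a) = vcomp D (F2 F b) (F2 F a)) \<and>
     (\<forall>a b f f' g g' X Y Z. arr1 C f X Y \<longrightarrow> arr1 C g Y Z \<longrightarrow> arr2 C a f f' \<longrightarrow> arr2 C b g g' \<longrightarrow>
        F2 F (hcomp C b a) = hcomp D (F2 F b) (F2 F a))"
  by (cases F) (simp add: twofunctor_def F0_def F1_def F2_def)

lemma twonatural_iff: "twonatural C D a \<longleftrightarrow>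
     twofunctor C D (nsrc a) \<and> twofunctor C D (ntgt a) \<and> ncmp a \<in> extensional (Obj C) \<and>
     (\<forall>X\<in>Obj C. arr1 D (ncmp a X) (F0 (nsrc a) X) (F0 (ntgt a) X)) \<and>
     (\<forall>f X Y. arr1 C f X Y \<longrightarrow> comp1 D (F1 (ntgt a) f) (ncmp a X) = comp1 D (ncmp a Y) (F1 (nsrc a) f)) \<and>
     (\<forall>t f g X Y. arr1 C f X Y \<longrightarrow> arr2 C t f g \<longrightarrow>
        rwhisk D (F2 (ntgt a) t) (ncmp a X) = lwhisk D (ncmp a Y) (F2 (nsrc a) t))"
  by (simp add: twonatural_def Let_def)

lemma modification_iff: "modification C D G \<longleftrightarrow>
     twonatural C D (nsrc G) \<and> twonatural C D (ntgt G) \<and> nsrc (nsrc G) = nsrc (ntgt G) \<and>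
     ntgt (nsrc G) = ntgt (ntgt G) \<and> ncmp G \<in> extensional (Obj C) \<and>
     (\<forall>X\<in>Obj C. arr2 D (ncmp G X) (ncmp (nsrc G) X) (ncmp (ntgt G) X)) \<and>
     (\<forall>f X Y. arr1 C f X Y \<longrightarrow>
        lwhisk D (F1 (ntgt (nsrc G)) f) (ncmp G X) = rwhisk D (ncmp G Y) (F1 (nsrc (nsrc G)) f))"
  by (simp add: modification_def Let_def)

locale S = C: tc C + D: tc D
  for C :: "('oc,'mc,'tc) twocat" and D :: "('od,'md,'td) twocat" +
  fixes E M :: "'md set"
  assumes efs: "enhanced_fs D E M"
    and sep: "separates_parallel_pairs D E M"
    and epi: "\<forall>e\<in>E. two_epi D e" and mono: "\<forall>m\<in>M. two_mono D m"
    and cre: "\<forall>m\<in>M. creates_inv2 D m"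
begin

abbreviation "FC \<equiv> funcat C D"

lemma fobj: "twofunctor C D F \<Longrightarrow> X \<in> Obj C \<Longrightarrow> F0 F X \<in> Obj D"
  unfolding twofunctor_iff by (elim conjE) blast
lemma farr1: "twofunctor C D F \<Longrightarrow> arr1 C f X Y \<Longrightarrow> arr1 D (F1 F f) (F0 F X) (F0 F Y)"
  unfolding twofunctor_iff by (elim conjE) blast
lemma farr2: "twofunctor C D F \<Longrightarrow> arr2 C t f g \<Longrightarrow> arr2 D (F2 F t) (F1 F f) (F1 F g)"
  unfolding twofunctor_iff by (elim conjE) blast
lemma fid1: "twofunctor C D F \<Longrightarrow> X \<in> Obj C \<Longrightarrow> F1 F (id1 C X) = id1 D (F0 F X)"
  unfolding twofunctor_iff by (elim conjE) blast
lemma fcomp: "twofunctor C D F \<Longrightarrow> arr1 C f X Y \<Longrightarrow> arr1 C g Y Z \<Longrightarrow>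
   F1 F (comp1 C g f) = comp1 D (F1 F g) (F1 F f)"
  unfolding twofunctor_iff by (elim conjE) blast
lemma fid2: "twofunctor C D F \<Longrightarrow> f \<in> Hom1 C \<Longrightarrow> F2 F (id2 C f) = id2 D (F1 F f)"
  unfolding twofunctor_iff by (elim conjE) blast
lemma fvcomp: "twofunctor C D F \<Longrightarrow> arr2 C a f g \<Longrightarrow> arr2 C b g h \<Longrightarrow>
   F2 F (vcomp C b a) = vcomp D (F2 F b) (F2 F a)"
  unfolding twofunctor_iff by (elim conjE) blast
lemma fhcomp: "twofunctor C D F \<Longrightarrow> arr1 C f X Y \<Longrightarrow> arr1 C g Y Z \<Longrightarrow> arr2 C a f f' \<Longrightarrow> arr2 C b g g' \<Longrightarrow>
   F2 F (hcomp C b a) = hcomp D (F2 F b) (F2 F a)"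
  unfolding twofunctor_iff apply (elim conjE)
  apply (erule allE[of _ a], erule allE[of _ b], erule allE[of _ f], erule allE[of _ f'],
     erule allE[of _ g], erule allE[of _ g'], erule allE[of _ X], erule allE[of _ Y], erule allE[of _ Z])
  by blast

lemma nsrcF: "twonatural C D a \<Longrightarrow> twofunctor C D (nsrc a)" unfolding twonatural_iff by blast
lemma ntgtF: "twonatural C D a \<Longrightarrow> twofunctor C D (ntgt a)" unfolding twonatural_iff by blast
lemma nxt: "twonatural C D a \<Longrightarrow> ncmp a \<in> extensional (Obj C)" unfolding twonatural_iff by blast
lemma narr: "twonatural C D a \<Longrightarrow> X \<in> Obj C \<Longrightarrow> arr1 D (ncmp a X) (F0 (nsrc a) X) (F0 (ntgt a) X)"
  unfolding twonatural_iff by (elim conjE) blast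
lemma nnat: "twonatural C D a \<Longrightarrow> arr1 C f X Y \<Longrightarrow>
   comp1 D (F1 (ntgt a) f) (ncmp a X) = comp1 D (ncmp a Y) (F1 (nsrc a) f)"
  unfolding twonatural_iff by (elim conjE) blast
lemma n2nat: "twonatural C D a \<Longrightarrow> arr1 C f X Y \<Longrightarrow> arr2 C t f g \<Longrightarrow>
   rwhisk D (F2 (ntgt a) t) (ncmp a X) = lwhisk D (ncmp a Y) (F2 (nsrc a) t)"
  unfolding twonatural_iff by (elim conjE) blast

lemma mnsrc: "modification C D G \<Longrightarrow> twonatural C D (nsrc G)" unfolding modification_iff by blast
lemma mntgt: "modification C D G \<Longrightarrow> twonatural C D (ntgt G)" unfolding modification_iff by blast
lemma mext: "modification C D G \<Longrightarrow> ncmp G \<in> extensional (Obj C)" unfolding modification_iff by blast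
lemma marr: "modification C D G \<Longrightarrow> X \<in> Obj C \<Longrightarrow> arr2 D (ncmp G X) (ncmp (nsrc G) X) (ncmp (ntgt G) X)"
  unfolding modification_iff by (elim conjE) blast
lemma mnat: "modification C D G \<Longrightarrow> arr1 C f X Y \<Longrightarrow>
   lwhisk D (F1 (ntgt (nsrc G)) f) (ncmp G X) = rwhisk D (ncmp G Y) (F1 (nsrc (nsrc G)) f)"
  unfolding modification_iff by (elim conjE) blast

lemma Carr1_objs: "arr1 C f X Y \<Longrightarrow> X \<in> Obj C \<and> Y \<in> Obj C" by (rule C.arr1_objs)

end



context S begin

definition dinv where "dinv a = (SOME b. arr2 D b (cod2 D a) (dom2 D a) \<and>
   vcomp D b a = id2 D (dom2 D a) \<and> vcomp D a b = id2 D (cod2 D a))"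

lemma dinv: "arr2 D a f g \<Longrightarrow> inv2 D a \<Longrightarrow>
   arr2 D (dinv a) g f \<and> vcomp D (dinv a) a = id2 D f \<and> vcomp D a (dinv a) = id2 D g"
proof -
  assume a: "arr2 D a f g" and i: "inv2 D a"
  have "\<exists>b. arr2 D b (cod2 D a) (dom2 D a) \<and> vcomp D b a = id2 D (dom2 D a) \<and> vcomp D a b = id2 D (cod2 D a)"
    using i unfolding inv2_def by blast
  hence "arr2 D (dinv a) (cod2 D a) (dom2 D a) \<and> vcomp D (dinv a) a = id2 D (dom2 D a) \<and> vcomp D a (dinv a) = id2 D (cod2 D a)"
    unfolding dinv_def by (rule someI_ex)
  thus ?thesis using a unfolding arr2_def by simp
qed

lemma Carr1: "arr1 C f X Y \<Longrightarrow> X \<in> Obj C" "arr1 C f X Y \<Longrightarrow> Y \<in> Obj C"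
  using C.arr1_objs by blast+

lemma comp_nat:
  assumes a: "twonatural C D a" and b: "twonatural C D b" and ab: "ntgt a = nsrc b"
  shows "twonatural C D (comp1 FC b a)"
proof -
  let ?F = "nsrc a" and ?G = "ntgt a" and ?H = "ntgt b"
  have Fa: "twofunctor C D ?F" "twofunctor C D ?G" "twofunctor C D ?H"
    using a b by (simp_all add: nsrcF ntgtF)
  have ax: "\<And>X. X \<in> Obj C \<Longrightarrow> arr1 D (ncmp a X) (F0 ?F X) (F0 ?G X)" using narr[OF a] by simp
  have bx: "\<And>X. X \<in> Obj C \<Longrightarrow> arr1 D (ncmp b X) (F0 ?G X) (F0 ?H X)" using narr[OF b] ab by simp
  have na: "\<And>f X Y. arr1 C f X Y \<Longrightarrow> comp1 D (F1 ?G f) (ncmp a X) = comp1 D (ncmp a Y) (F1 ?F f)"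
    using nnat[OF a] by simp
  have nb: "\<And>f X Y. arr1 C f X Y \<Longrightarrow> comp1 D (F1 ?H f) (ncmp b X) = comp1 D (ncmp b Y) (F1 ?G f)"
    using nnat[OF b] ab by simp
  have n2a: "\<And>t f g X Y. arr1 C f X Y \<Longrightarrow> arr2 C t f g \<Longrightarrow>
     rwhisk D (F2 ?G t) (ncmp a X) = lwhisk D (ncmp a Y) (F2 ?F t)"
    using n2nat[OF a] by simp
  have n2b: "\<And>t f g X Y. arr1 C f X Y \<Longrightarrow> arr2 C t f g \<Longrightarrow>
     rwhisk D (F2 ?H t) (ncmp b X) = lwhisk D (ncmp b Y) (F2 ?G t)"
    using n2nat[OF b] ab by simp
  show ?thesis unfolding twonatural_iff
  proof (intro conjI allI impI ballI)
    show "twofunctor C D (nsrc (comp1 FC b a))" "twofunctor C D (ntgt (comp1 FC b a))"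
      using Fa by simp_all
    show "ncmp (comp1 FC b a) \<in> extensional (Obj C)" by simp
  next
    fix X assume X: "X \<in> Obj C"
    show "arr1 D (ncmp (comp1 FC b a) X) (F0 (nsrc (comp1 FC b a)) X) (F0 (ntgt (comp1 FC b a)) X)"
      using X D.comp_arr[OF ax[OF X] bx[OF X]] by simp
  next
    fix f X Y assume f: "arr1 C f X Y"
    have X: "X \<in> Obj C" and Y: "Y \<in> Obj C" using Carr1 f by auto
    have "comp1 D (F1 ?H f) (comp1 D (ncmp b X) (ncmp a X)) = comp1 D (comp1 D (F1 ?H f) (ncmp b X)) (ncmp a X)"
      using D.comp_assoc[OF ax[OF X] bx[OF X] farr1[OF Fa(3) f]] .
    also have "\<dots> = comp1 D (comp1 D (ncmp b Y) (F1 ?G f)) (ncmp a X)" using nb[OF f] by simp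
    also have "\<dots> = comp1 D (ncmp b Y) (comp1 D (F1 ?G f) (ncmp a X))"
      using D.comp_assoc[OF ax[OF X] farr1[OF Fa(2) f] bx[OF Y]] by simp
    also have "\<dots> = comp1 D (ncmp b Y) (comp1 D (ncmp a Y) (F1 ?F f))" using na[OF f] by simp
    also have "\<dots> = comp1 D (comp1 D (ncmp b Y) (ncmp a Y)) (F1 ?F f)"
      using D.comp_assoc[OF farr1[OF Fa(1) f] ax[OF Y] bx[OF Y]] .
    finally show "comp1 D (F1 (ntgt (comp1 FC b a)) f) (ncmp (comp1 FC b a) X) =
         comp1 D (ncmp (comp1 FC b a) Y) (F1 (nsrc (comp1 FC b a)) f)" using X Y by simp
  next
    fix t f g X Y assume f: "arr1 C f X Y" and t: "arr2 C t f g"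
    have X: "X \<in> Obj C" and Y: "Y \<in> Obj C" using Carr1 f by auto
    have g: "arr1 C g X Y" using C.arr2_arr1[OF t f] .
    have "rwhisk D (F2 ?H t) (comp1 D (ncmp b X) (ncmp a X)) = rwhisk D (rwhisk D (F2 ?H t) (ncmp b X)) (ncmp a X)"
      using D.rw_rw[OF ax[OF X] bx[OF X] farr1[OF Fa(3) f] farr2[OF Fa(3) t]] by simp
    also have "\<dots> = rwhisk D (lwhisk D (ncmp b Y) (F2 ?G t)) (ncmp a X)" using n2b[OF f t] by simp
    also have "\<dots> = lwhisk D (ncmp b Y) (rwhisk D (F2 ?G t) (ncmp a X))"
      using D.lw_rw[OF ax[OF X] farr1[OF Fa(2) f] bx[OF Y] farr2[OF Fa(2) t]] by simp
    also have "\<dots> = lwhisk D (ncmp b Y) (lwhisk D (ncmp a Y) (F2 ?F t))" using n2a[OF f t] by simp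
    also have "\<dots> = lwhisk D (comp1 D (ncmp b Y) (ncmp a Y)) (F2 ?F t)"
      using D.lw_lw[OF farr1[OF Fa(1) f] ax[OF Y] bx[OF Y] farr2[OF Fa(1) t]] .
    finally show "rwhisk D (F2 (ntgt (comp1 FC b a)) t) (ncmp (comp1 FC b a) X) =
         lwhisk D (ncmp (comp1 FC b a) Y) (F2 (nsrc (comp1 FC b a)) t)" using X Y by simp
  qed
qed

lemma id_nat:
  assumes F: "twofunctor C D F"
  shows "twonatural C D (id1 FC F)"
  unfolding twonatural_iff
proof (intro conjI allI impI ballI)
  show "twofunctor C D (nsrc (id1 FC F))" "twofunctor C D (ntgt (id1 FC F))" using F by simp_all
  show "ncmp (id1 FC F) \<in> extensional (Obj C)" by simp
next
  fix X assume X: "X \<in> Obj C"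
  show "arr1 D (ncmp (id1 FC F) X) (F0 (nsrc (id1 FC F)) X) (F0 (ntgt (id1 FC F)) X)"
    using X D.id1_arr[OF fobj[OF F X]] by simp
next
  fix f X Y assume f: "arr1 C f X Y"
  have X: "X \<in> Obj C" and Y: "Y \<in> Obj C" using Carr1 f by auto
  show "comp1 D (F1 (ntgt (id1 FC F)) f) (ncmp (id1 FC F) X) =
         comp1 D (ncmp (id1 FC F) Y) (F1 (nsrc (id1 FC F)) f)"
    using X Y D.comp_id_r[OF farr1[OF F f]] D.comp_id_l[OF farr1[OF F f]] by simp
next
  fix t f g X Y assume f: "arr1 C f X Y" and t: "arr2 C t f g"
  have X: "X \<in> Obj C" and Y: "Y \<in> Obj C" using Carr1 f by auto
  show "rwhisk D (F2 (ntgt (id1 FC F)) t) (ncmp (id1 FC F) X) =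
         lwhisk D (ncmp (id1 FC F) Y) (F2 (nsrc (id1 FC F)) t)"
    using X Y D.rw_idobj[OF farr1[OF F f] farr2[OF F t]] D.lw_idobj[OF farr1[OF F f] farr2[OF F t]] by simp
qed

lemma inv2_FC_D:
  assumes "inv2 FC G" shows "modification C D G" "\<And>X. X \<in> Obj C \<Longrightarrow> inv2 D (ncmp G X)"
proof -
  show G: "modification C D G" using assms unfolding inv2_def by simp
  fix X assume X: "X \<in> Obj C"
  obtain b where b: "arr2 FC b (ntgt G) (nsrc G)" "vcomp FC b G = id2 FC (nsrc G)"
     "vcomp FC G b = id2 FC (ntgt G)" using assms unfolding inv2_def by auto
  have bm: "modification C D b" "nsrc b = ntgt G" "ntgt b = nsrc G" using b(1) by (auto simp: fc_arr2)
  have 1: "vcomp D (ncmp b X) (ncmp G X) = id2 D (ncmp (nsrc G) X)"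
    using arg_cong[OF b(2), of "\<lambda>x. ncmp x X"] X by simp
  have 2: "vcomp D (ncmp G X) (ncmp b X) = id2 D (ncmp (ntgt G) X)"
    using arg_cong[OF b(3), of "\<lambda>x. ncmp x X"] X by simp
  have a: "arr2 D (ncmp G X) (ncmp (nsrc G) X) (ncmp (ntgt G) X)" using marr[OF G X] .
  have "arr2 D (ncmp b X) (ncmp (ntgt G) X) (ncmp (nsrc G) X)" using marr[OF bm(1) X] bm by simp
  thus "inv2 D (ncmp G X)" unfolding D.inv2_iff[OF a] using 1 2 by blast
qed

lemma D_inv2_FC:
  assumes G: "modification C D G" and inv: "\<And>X. X \<in> Obj C \<Longrightarrow> inv2 D (ncmp G X)"
  shows "inv2 FC G"
proof -
  let ?a = "nsrc G" and ?b = "ntgt G"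
  let ?H = "(?b, ?a, \<lambda>X\<in>Obj C. dinv (ncmp G X))"
  have a: "twonatural C D ?a" and b: "twonatural C D ?b" using G mnsrc mntgt by blast+
  have ab: "nsrc ?a = nsrc ?b" "ntgt ?a = ntgt ?b" using G unfolding modification_iff by blast+
  have gx: "\<And>X. X \<in> Obj C \<Longrightarrow> arr2 D (ncmp G X) (ncmp ?a X) (ncmp ?b X)" using marr[OF G] .
  have di: "\<And>X. X \<in> Obj C \<Longrightarrow> arr2 D (dinv (ncmp G X)) (ncmp ?b X) (ncmp ?a X) \<and>
      vcomp D (dinv (ncmp G X)) (ncmp G X) = id2 D (ncmp ?a X) \<and>
      vcomp D (ncmp G X) (dinv (ncmp G X)) = id2 D (ncmp ?b X)"
    using dinv[OF gx inv] by blast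
  let ?F = "nsrc ?a" and ?K = "ntgt ?a"
  have Fa: "twofunctor C D ?F" "twofunctor C D ?K" using a nsrcF ntgtF by blast+
  have ax: "\<And>X. X \<in> Obj C \<Longrightarrow> arr1 D (ncmp ?a X) (F0 ?F X) (F0 ?K X)" using narr[OF a] by simp
  have bx: "\<And>X. X \<in> Obj C \<Longrightarrow> arr1 D (ncmp ?b X) (F0 ?F X) (F0 ?K X)" using narr[OF b] ab by simp
  have Hm: "modification C D ?H" unfolding modification_iff
  proof (intro conjI allI impI ballI)
    show "twonatural C D (nsrc ?H)" "twonatural C D (ntgt ?H)" using a b by simp_all
    show "nsrc (nsrc ?H) = nsrc (ntgt ?H)" "ntgt (nsrc ?H) = ntgt (ntgt ?H)" using ab by simp_all
    show "ncmp ?H \<in> extensional (Obj C)" by simp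
  next
    fix X assume X: "X \<in> Obj C"
    show "arr2 D (ncmp ?H X) (ncmp (nsrc ?H) X) (ncmp (ntgt ?H) X)" using X di by simp
  next
    fix f X Y assume f: "arr1 C f X Y"
    have X: "X \<in> Obj C" and Y: "Y \<in> Obj C" using Carr1 f by auto
    have Ff: "arr1 D (F1 ?F f) (F0 ?F X) (F0 ?F Y)" and Kf: "arr1 D (F1 ?K f) (F0 ?K X) (F0 ?K Y)"
      using farr1 Fa f by blast+
    have eqa: "comp1 D (F1 ?K f) (ncmp ?a X) = comp1 D (ncmp ?a Y) (F1 ?F f)" using nnat[OF a f] .
    have eqb: "comp1 D (F1 ?K f) (ncmp ?b X) = comp1 D (ncmp ?b Y) (F1 ?F f)" using nnat[OF b f] ab by simp
    have K: "lwhisk D (F1 ?K f) (ncmp G X) = rwhisk D (ncmp G Y) (F1 ?F f)" using mnat[OF G f] .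
    have Karr: "arr2 D (lwhisk D (F1 ?K f) (ncmp G X)) (comp1 D (F1 ?K f) (ncmp ?a X)) (comp1 D (F1 ?K f) (ncmp ?b X))"
      using D.lw_arr[OF ax[OF X] Kf gx[OF X]] .
    have Larr: "arr2 D (lwhisk D (F1 ?K f) (dinv (ncmp G X))) (comp1 D (F1 ?K f) (ncmp ?b X)) (comp1 D (F1 ?K f) (ncmp ?a X))"
      using D.lw_arr[OF bx[OF X] Kf] di[OF X] by blast
    have Rarr: "arr2 D (rwhisk D (dinv (ncmp G Y)) (F1 ?F f)) (comp1 D (F1 ?K f) (ncmp ?b X)) (comp1 D (F1 ?K f) (ncmp ?a X))"
      using D.rw_arr[OF Ff bx[OF Y]] di[OF Y] eqa eqb by simp
    have 1: "vcomp D (lwhisk D (F1 ?K f) (dinv (ncmp G X))) (lwhisk D (F1 ?K f) (ncmp G X)) =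
        id2 D (comp1 D (F1 ?K f) (ncmp ?a X))"
      using D.lw_vcomp[OF ax[OF X] Kf gx[OF X], of "dinv (ncmp G X)" "ncmp ?a X"] di[OF X] D.lw_id[OF ax[OF X] Kf] by simp
    have 2: "vcomp D (lwhisk D (F1 ?K f) (ncmp G X)) (rwhisk D (dinv (ncmp G Y)) (F1 ?F f)) =
        id2 D (comp1 D (F1 ?K f) (ncmp ?b X))"
      using K D.rw_vcomp[OF Ff bx[OF Y], of "dinv (ncmp G Y)" "ncmp ?a Y" "ncmp G Y"] di[OF Y] gx[OF Y]
        D.rw_id[OF Ff bx[OF Y]] eqb by simp
    have "lwhisk D (F1 ?K f) (dinv (ncmp G X)) = rwhisk D (dinv (ncmp G Y)) (F1 ?F f)"
      using D.inv_unique[OF Karr Larr Rarr 1 2] .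
    thus "lwhisk D (F1 (ntgt (nsrc ?H)) f) (ncmp ?H X) = rwhisk D (ncmp ?H Y) (F1 (nsrc (nsrc ?H)) f)"
      using X Y ab by simp
  qed
  have e1: "vcomp FC ?H G = id2 FC (nsrc G)"
    using di G mext by (auto intro!: restrict_ext)
  have e2: "vcomp FC G ?H = id2 FC (ntgt G)"
    using di G mext by (auto intro!: restrict_ext)
  show ?thesis unfolding inv2_def
  proof (intro conjI exI[of _ ?H])
    show "G \<in> Hom2 FC" using G by simp
    show "arr2 FC ?H (cod2 FC G) (dom2 FC G)" using Hm by (simp add: fc_arr2)
    show "vcomp FC ?H G = id2 FC (dom2 FC G)" using e1 by simp
    show "vcomp FC G ?H = id2 FC (cod2 FC G)" using e2 by simp
  qed
qed

lemma iso1_comp: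
  assumes "iso1 FC a" and X: "X \<in> Obj C" shows "iso1 D (ncmp a X)"
proof -
  obtain g where g: "arr1 FC g (ntgt a) (nsrc a)" "comp1 FC g a = id1 FC (nsrc a)"
     "comp1 FC a g = id1 FC (ntgt a)" and a: "twonatural C D a" using assms unfolding iso1_def by auto
  have gn: "twonatural C D g" "nsrc g = ntgt a" "ntgt g = nsrc a" using g(1) by (auto simp: fc_arr1)
  have 1: "comp1 D (ncmp g X) (ncmp a X) = id1 D (F0 (nsrc a) X)"
    using arg_cong[OF g(2), of "\<lambda>x. ncmp x X"] X by simp
  have 2: "comp1 D (ncmp a X) (ncmp g X) = id1 D (F0 (ntgt a) X)"
    using arg_cong[OF g(3), of "\<lambda>x. ncmp x X"] X by simp
  have ax: "arr1 D (ncmp a X) (F0 (nsrc a) X) (F0 (ntgt a) X)" using narr[OF a X] .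
  have gx: "arr1 D (ncmp g X) (F0 (ntgt a) X) (F0 (nsrc a) X)" using narr[OF gn(1) X] gn by simp
  show ?thesis unfolding iso1_def using ax gx 1 2 by (auto simp: arr1_def)
qed

end



lemma F012_simps[simp]: "F0 (x,y,z) = x" "F1 (x,y,z) = y" "F2 (x,y,z) = z"
  by (simp_all add: F0_def F1_def F2_def)

context S begin

lemmas EF = efs[unfolded enhanced_fs_def]
lemmas EF1 = EF[THEN conjunct1]
lemmas EF2 = EF[THEN conjunct2, THEN conjunct1]
lemmas EF3 = EF[THEN conjunct2, THEN conjunct2, THEN conjunct1]
lemmas EF4 = EF[THEN conjunct2, THEN conjunct2, THEN conjunct2, THEN conjunct1]
lemmas EF5 = EF[THEN conjunct2, THEN conjunct2, THEN conjunct2, THEN conjunct2, THEN conjunct1]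
lemmas EF6 = EF[THEN conjunct2, THEN conjunct2, THEN conjunct2, THEN conjunct2, THEN conjunct2, THEN conjunct1]
lemmas EF7 = EF[THEN conjunct2, THEN conjunct2, THEN conjunct2, THEN conjunct2, THEN conjunct2, THEN conjunct2]

lemma EHom: "e \<in> E \<Longrightarrow> e \<in> Hom1 D" using EF1 by blast
lemma MHom: "m \<in> M \<Longrightarrow> m \<in> Hom1 D" using EF2 by blast

lemma D_ii:
  assumes "\<epsilon> \<in> E" "\<mu> \<in> M" "arr1 D \<epsilon> F F'" "arr1 D \<mu> G G'" "arr1 D \<alpha> F G" "arr1 D \<alpha>' F' G'"
    "arr2 D \<Psi> (comp1 D \<alpha>' \<epsilon>) (comp1 D \<mu> \<alpha>)" "inv2 D \<Psi>"
  shows "\<exists>!(\<delta>, \<Psi>t). arr1 D \<delta> F' G \<and> arr2 D \<Psi>t \<alpha>' (comp1 D \<mu> \<delta>) \<and> inv2 D \<Psi>t \<and>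
                     comp1 D \<delta> \<epsilon> = \<alpha> \<and> rwhisk D \<Psi>t \<epsilon> = \<Psi>"
    "\<Psi> = id2 D (comp1 D \<alpha>' \<epsilon>) \<Longrightarrow> arr1 D \<delta> F' G \<Longrightarrow> arr2 D \<Psi>t \<alpha>' (comp1 D \<mu> \<delta>) \<Longrightarrow> inv2 D \<Psi>t \<Longrightarrow>
       comp1 D \<delta> \<epsilon> = \<alpha> \<Longrightarrow> rwhisk D \<Psi>t \<epsilon> = \<Psi> \<Longrightarrow> comp1 D \<mu> \<delta> = \<alpha>' \<and> \<Psi>t = id2 D \<alpha>'"
proof -
  have X: "(\<exists>!(\<delta>, \<Psi>t). arr1 D \<delta> F' G \<and> arr2 D \<Psi>t \<alpha>' (comp1 D \<mu> \<delta>) \<and> inv2 D \<Psi>t \<and>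
                     comp1 D \<delta> \<epsilon> = \<alpha> \<and> rwhisk D \<Psi>t \<epsilon> = \<Psi>) \<and>
       (\<Psi> = id2 D (comp1 D \<alpha>' \<epsilon>) \<longrightarrow>
          (\<forall>\<delta> \<Psi>t. arr1 D \<delta> F' G \<and> arr2 D \<Psi>t \<alpha>' (comp1 D \<mu> \<delta>) \<and> inv2 D \<Psi>t \<and>
                     comp1 D \<delta> \<epsilon> = \<alpha> \<and> rwhisk D \<Psi>t \<epsilon> = \<Psi> \<longrightarrow>
                     comp1 D \<mu> \<delta> = \<alpha>' \<and> \<Psi>t = id2 D \<alpha>'))"
    using EF6[rule_format, OF assms(1,2), of F F' G G' \<alpha> \<alpha>' \<Psi>] assms(3-) by blast
  thus "\<exists>!(\<delta>, \<Psi>t). arr1 D \<delta> F' G \<and> arr2 D \<Psi>t \<alpha>' (comp1 D \<mu> \<delta>) \<and> inv2 D \<Psi>t \<and>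
                     comp1 D \<delta> \<epsilon> = \<alpha> \<and> rwhisk D \<Psi>t \<epsilon> = \<Psi>" by blast
  show "\<Psi> = id2 D (comp1 D \<alpha>' \<epsilon>) \<Longrightarrow> arr1 D \<delta> F' G \<Longrightarrow> arr2 D \<Psi>t \<alpha>' (comp1 D \<mu> \<delta>) \<Longrightarrow> inv2 D \<Psi>t \<Longrightarrow>
       comp1 D \<delta> \<epsilon> = \<alpha> \<Longrightarrow> rwhisk D \<Psi>t \<epsilon> = \<Psi> \<Longrightarrow> comp1 D \<mu> \<delta> = \<alpha>' \<and> \<Psi>t = id2 D \<alpha>'"
    using X by blast
qed

lemma D_ii_ex:
  assumes "\<epsilon> \<in> E" "\<mu> \<in> M" "arr1 D \<epsilon> F F'" "arr1 D \<mu> G G'" "arr1 D \<alpha> F G" "arr1 D \<alpha>' F' G'"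
    "arr2 D \<Psi> (comp1 D \<alpha>' \<epsilon>) (comp1 D \<mu> \<alpha>)" "inv2 D \<Psi>"
  obtains \<delta> \<Psi>t where "arr1 D \<delta> F' G" "arr2 D \<Psi>t \<alpha>' (comp1 D \<mu> \<delta>)" "inv2 D \<Psi>t"
                     "comp1 D \<delta> \<epsilon> = \<alpha>" "rwhisk D \<Psi>t \<epsilon> = \<Psi>"
  using D_ii(1)[OF assms] by auto

lemma D_ii_un:
  assumes "\<epsilon> \<in> E" "\<mu> \<in> M" "arr1 D \<epsilon> F F'" "arr1 D \<mu> G G'" "arr1 D \<alpha> F G" "arr1 D \<alpha>' F' G'"
    "arr2 D \<Psi> (comp1 D \<alpha>' \<epsilon>) (comp1 D \<mu> \<alpha>)" "inv2 D \<Psi>"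
  and "arr1 D \<delta>1 F' G" "arr2 D P1 \<alpha>' (comp1 D \<mu> \<delta>1)" "inv2 D P1" "comp1 D \<delta>1 \<epsilon> = \<alpha>" "rwhisk D P1 \<epsilon> = \<Psi>"
  and "arr1 D \<delta>2 F' G" "arr2 D P2 \<alpha>' (comp1 D \<mu> \<delta>2)" "inv2 D P2" "comp1 D \<delta>2 \<epsilon> = \<alpha>" "rwhisk D P2 \<epsilon> = \<Psi>"
  shows "\<delta>1 = \<delta>2 \<and> P1 = P2"
proof -
  from D_ii(1)[OF assms(1-8)] have "\<And>p q. (case p of (\<delta>, \<Psi>t) \<Rightarrow> arr1 D \<delta> F' G \<and> arr2 D \<Psi>t \<alpha>' (comp1 D \<mu> \<delta>) \<and> inv2 D \<Psi>t \<and>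
                     comp1 D \<delta> \<epsilon> = \<alpha> \<and> rwhisk D \<Psi>t \<epsilon> = \<Psi>) \<Longrightarrow>
     (case q of (\<delta>, \<Psi>t) \<Rightarrow> arr1 D \<delta> F' G \<and> arr2 D \<Psi>t \<alpha>' (comp1 D \<mu> \<delta>) \<and> inv2 D \<Psi>t \<and>
                     comp1 D \<delta> \<epsilon> = \<alpha> \<and> rwhisk D \<Psi>t \<epsilon> = \<Psi>) \<Longrightarrow> p = q"
    by blast
  from this[of "(\<delta>1, P1)" "(\<delta>2, P2)"] assms(9-) show ?thesis by simp
qed

lemma D_iii:
  assumes "\<epsilon> \<in> E" "\<mu> \<in> M" "arr1 D \<epsilon> F F'" "arr1 D \<mu> G G'"
       "arr1 D \<alpha>1 F G" "arr1 D \<alpha>2 F G" "arr1 D \<alpha>1' F' G'" "arr1 D \<alpha>2' F' G'"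
       "comp1 D \<alpha>1' \<epsilon> = comp1 D \<mu> \<alpha>1" "comp1 D \<alpha>2' \<epsilon> = comp1 D \<mu> \<alpha>2"
       "arr2 D \<Phi> \<alpha>1 \<alpha>2" "arr2 D \<Phi>' \<alpha>1' \<alpha>2'" "lwhisk D \<mu> \<Phi> = rwhisk D \<Phi>' \<epsilon>"
       "arr1 D \<delta>1 F' G" "comp1 D \<delta>1 \<epsilon> = \<alpha>1" "comp1 D \<mu> \<delta>1 = \<alpha>1'"
       "arr1 D \<delta>2 F' G" "comp1 D \<delta>2 \<epsilon> = \<alpha>2" "comp1 D \<mu> \<delta>2 = \<alpha>2'"
  shows "\<exists>!\<Delta>. arr2 D \<Delta> \<delta>1 \<delta>2 \<and> rwhisk D \<Delta> \<epsilon> = \<Phi> \<and> lwhisk D \<mu> \<Delta> = \<Phi>'"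
  using EF7[rule_format, OF assms(1,2), of F F' G G' \<alpha>1 \<alpha>2 \<alpha>1' \<alpha>2' \<Phi> \<Phi>' \<delta>1 \<delta>2] assms(3-) by blast

lemma SEP: "arr1 D \<alpha> F G \<Longrightarrow> arr1 D \<beta> F G \<Longrightarrow> \<epsilon> \<in> E \<Longrightarrow> tgt1 D \<epsilon> = F \<Longrightarrow> comp1 D \<alpha> \<epsilon> = comp1 D \<beta> \<epsilon> \<Longrightarrow>
   \<mu> \<in> M \<Longrightarrow> src1 D \<mu> = G \<Longrightarrow> comp1 D \<mu> \<alpha> = comp1 D \<mu> \<beta> \<Longrightarrow> \<alpha> = \<beta>"
  using sep unfolding separates_parallel_pairs_def by blast

lemma EPI: "e \<in> E \<Longrightarrow> arr1 D e X Y \<Longrightarrow> arr1 D b Y H \<Longrightarrow> arr1 D b' Y H \<Longrightarrow> arr2 D \<Psi> b b' \<Longrightarrow> arr2 D \<Psi>' b b' \<Longrightarrow>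
   rwhisk D \<Psi> e = rwhisk D \<Psi>' e \<Longrightarrow> \<Psi> = \<Psi>'"
  using epi unfolding two_epi_def arr1_def by blast

lemma MONO: "m \<in> M \<Longrightarrow> arr1 D m X Y \<Longrightarrow> arr1 D b F X \<Longrightarrow> arr1 D b' F X \<Longrightarrow> arr2 D \<Psi> b b' \<Longrightarrow> arr2 D \<Psi>' b b' \<Longrightarrow>
   lwhisk D m \<Psi> = lwhisk D m \<Psi>' \<Longrightarrow> \<Psi> = \<Psi>'"
  using mono unfolding two_mono_def arr1_def by blast

lemma CRE: "m \<in> M \<Longrightarrow> arr1 D m X Y \<Longrightarrow> arr1 D a F X \<Longrightarrow> arr1 D b F X \<Longrightarrow>
   arr2 D \<Psi> (comp1 D m a) (comp1 D m b) \<Longrightarrow> inv2 D \<Psi> \<Longrightarrow>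
   (\<exists>!\<Psi>h. arr2 D \<Psi>h a b \<and> inv2 D \<Psi>h \<and> lwhisk D m \<Psi>h = \<Psi>)"
  using cre unfolding creates_inv2_def arr1_def by blast

end



context S begin

definition H0 where "H0 ee X = tgt1 D (ee X)"
definition lift where "lift a ee mm f = (THE d. arr1 D d (H0 ee (src1 C f)) (H0 ee (tgt1 C f)) \<and>
   comp1 D d (ee (src1 C f)) = comp1 D (ee (tgt1 C f)) (F1 (nsrc a) f) \<and>
   comp1 D (mm (tgt1 C f)) d = comp1 D (F1 (ntgt a) f) (mm (src1 C f)))"
definition lift2 where "lift2 a ee mm t = (THE \<Delta>. arr2 D \<Delta> (lift a ee mm (dom2 C t)) (lift a ee mm (cod2 C t)) \<and>
   rwhisk D \<Delta> (ee (src1 C (dom2 C t))) = lwhisk D (ee (tgt1 C (dom2 C t))) (F2 (nsrc a) t) \<and>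
   lwhisk D (mm (tgt1 C (dom2 C t))) \<Delta> = rwhisk D (F2 (ntgt a) t) (mm (src1 C (dom2 C t))))"
definition Hf where "Hf a ee mm = (\<lambda>X\<in>Obj C. H0 ee X, \<lambda>f\<in>Hom1 C. lift a ee mm f, \<lambda>t\<in>Hom2 C. lift2 a ee mm t)"

context
  fixes a ee mm
  assumes a: "twonatural C D a"
  and ch: "\<forall>X\<in>Obj C. ee X \<in> E \<and> mm X \<in> M \<and> tgt1 D (ee X) = src1 D (mm X) \<and> ncmp a X = comp1 D (mm X) (ee X)"
begin

lemma Fa: "twofunctor C D (nsrc a)" using a nsrcF by blast
lemma Ga: "twofunctor C D (ntgt a)" using a ntgtF by blast

lemma aX: "X \<in> Obj C \<Longrightarrow> ncmp a X = comp1 D (mm X) (ee X)" using ch by blast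

lemma eemm: assumes X: "X \<in> Obj C"
  shows "ee X \<in> E" "arr1 D (ee X) (F0 (nsrc a) X) (H0 ee X)" "mm X \<in> M" "arr1 D (mm X) (H0 ee X) (F0 (ntgt a) X)"
proof -
  show e: "ee X \<in> E" and m: "mm X \<in> M" using ch X by blast+
  have 1: "arr1 D (ee X) (src1 D (ee X)) (H0 ee X)" using EHom[OF e] unfolding H0_def arr1_def by simp
  have 2: "arr1 D (mm X) (H0 ee X) (tgt1 D (mm X))" using MHom[OF m] ch X unfolding H0_def arr1_def by simp
  have "arr1 D (ncmp a X) (src1 D (ee X)) (tgt1 D (mm X))" using D.comp_arr[OF 1 2] aX[OF X] by simp
  moreover have "arr1 D (ncmp a X) (F0 (nsrc a) X) (F0 (ntgt a) X)" using narr[OF a X] .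
  ultimately have "src1 D (ee X) = F0 (nsrc a) X" "tgt1 D (mm X) = F0 (ntgt a) X" unfolding arr1_def by auto
  thus "arr1 D (ee X) (F0 (nsrc a) X) (H0 ee X)" "arr1 D (mm X) (H0 ee X) (F0 (ntgt a) X)" using 1 2 by auto
qed

lemma sq: assumes f: "arr1 C f X Y"
  shows "comp1 D (comp1 D (F1 (ntgt a) f) (mm X)) (ee X) = comp1 D (mm Y) (comp1 D (ee Y) (F1 (nsrc a) f))"
proof -
  have X: "X \<in> Obj C" and Y: "Y \<in> Obj C" using Carr1 f by auto
  have Ff: "arr1 D (F1 (nsrc a) f) (F0 (nsrc a) X) (F0 (nsrc a) Y)" using farr1[OF Fa f] .
  have Gf: "arr1 D (F1 (ntgt a) f) (F0 (ntgt a) X) (F0 (ntgt a) Y)" using farr1[OF Ga f] .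
  have "comp1 D (comp1 D (F1 (ntgt a) f) (mm X)) (ee X) = comp1 D (F1 (ntgt a) f) (comp1 D (mm X) (ee X))"
    using D.comp_assoc[OF eemm(2)[OF X] eemm(4)[OF X] Gf] by simp
  also have "\<dots> = comp1 D (F1 (ntgt a) f) (ncmp a X)" using aX[OF X] by simp
  also have "\<dots> = comp1 D (ncmp a Y) (F1 (nsrc a) f)" using nnat[OF a f] .
  also have "\<dots> = comp1 D (comp1 D (mm Y) (ee Y)) (F1 (nsrc a) f)" using aX[OF Y] by simp
  also have "\<dots> = comp1 D (mm Y) (comp1 D (ee Y) (F1 (nsrc a) f))"
    using D.comp_assoc[OF Ff eemm(2)[OF Y] eemm(4)[OF Y]] by simp
  finally show ?thesis .
qed

lemma lift_uniq: assumes X: "X \<in> Obj C" and Y: "Y \<in> Obj C"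
  and "arr1 D d (H0 ee X) (H0 ee Y)" "arr1 D d' (H0 ee X) (H0 ee Y)"
  and "comp1 D d (ee X) = comp1 D d' (ee X)" "comp1 D (mm Y) d = comp1 D (mm Y) d'"
  shows "d = d'"
  using SEP[OF assms(3,4) eemm(1)[OF X] _ assms(5) eemm(3)[OF Y] _ assms(6)] eemm(2)[OF X] eemm(4)[OF Y]
  unfolding arr1_def by blast

lemma L1: assumes f: "arr1 C f X Y"
  shows "arr1 D (lift a ee mm f) (H0 ee X) (H0 ee Y) \<and>
    comp1 D (lift a ee mm f) (ee X) = comp1 D (ee Y) (F1 (nsrc a) f) \<and>
    comp1 D (mm Y) (lift a ee mm f) = comp1 D (F1 (ntgt a) f) (mm X)"
proof -
  have X: "X \<in> Obj C" and Y: "Y \<in> Obj C" using Carr1 f by auto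
  have sX: "src1 C f = X" "tgt1 C f = Y" using f unfolding arr1_def by auto
  have Ff: "arr1 D (F1 (nsrc a) f) (F0 (nsrc a) X) (F0 (nsrc a) Y)" using farr1[OF Fa f] .
  have Gf: "arr1 D (F1 (ntgt a) f) (F0 (ntgt a) X) (F0 (ntgt a) Y)" using farr1[OF Ga f] .
  let ?al = "comp1 D (ee Y) (F1 (nsrc a) f)" and ?al' = "comp1 D (F1 (ntgt a) f) (mm X)"
  have al: "arr1 D ?al (F0 (nsrc a) X) (H0 ee Y)" using D.comp_arr[OF Ff eemm(2)[OF Y]] .
  have al': "arr1 D ?al' (H0 ee X) (F0 (ntgt a) Y)" using D.comp_arr[OF eemm(4)[OF X] Gf] .
  have c: "arr1 D (comp1 D ?al' (ee X)) (F0 (nsrc a) X) (F0 (ntgt a) Y)" using D.comp_arr[OF eemm(2)[OF X] al'] .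
  have Psi: "arr2 D (id2 D (comp1 D ?al' (ee X))) (comp1 D ?al' (ee X)) (comp1 D (mm Y) ?al)"
    using D.id2_arr[OF c] sq[OF f] by simp
  obtain \<delta> \<Psi>t where d: "arr1 D \<delta> (H0 ee X) (H0 ee Y)" "arr2 D \<Psi>t ?al' (comp1 D (mm Y) \<delta>)" "inv2 D \<Psi>t"
                     "comp1 D \<delta> (ee X) = ?al" "rwhisk D \<Psi>t (ee X) = id2 D (comp1 D ?al' (ee X))"
    using D_ii_ex[OF eemm(1)[OF X] eemm(3)[OF Y] eemm(2)[OF X] eemm(4)[OF Y] al al' Psi D.id2_inv[OF c]] by blast
  have d2: "comp1 D (mm Y) \<delta> = ?al'"
    using D_ii(2)[OF eemm(1)[OF X] eemm(3)[OF Y] eemm(2)[OF X] eemm(4)[OF Y] al al' Psi D.id2_inv[OF c] refl d] by blast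
  have P: "arr1 D \<delta> (H0 ee X) (H0 ee Y) \<and> comp1 D \<delta> (ee X) = ?al \<and> comp1 D (mm Y) \<delta> = ?al'"
    using d d2 by blast
  have "lift a ee mm f = \<delta>" unfolding lift_def sX
  proof (rule the_equality)
    show "arr1 D \<delta> (H0 ee X) (H0 ee Y) \<and> comp1 D \<delta> (ee X) = ?al \<and> comp1 D (mm Y) \<delta> = ?al'" using P .
  next
    fix d' assume "arr1 D d' (H0 ee X) (H0 ee Y) \<and> comp1 D d' (ee X) = ?al \<and> comp1 D (mm Y) d' = ?al'"
    thus "d' = \<delta>" using lift_uniq[OF X Y] P by metis
  qed
  thus ?thesis using P by simp
qed

lemma L1u: assumes f: "arr1 C f X Y" and "arr1 D d (H0 ee X) (H0 ee Y)"
  and "comp1 D d (ee X) = comp1 D (ee Y) (F1 (nsrc a) f)"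
  and "comp1 D (mm Y) d = comp1 D (F1 (ntgt a) f) (mm X)"
  shows "lift a ee mm f = d"
proof -
  have X: "X \<in> Obj C" and Y: "Y \<in> Obj C" using Carr1 f by auto
  show ?thesis using lift_uniq[OF X Y] L1[OF f] assms(2-) by metis
qed


lemma L2: assumes f: "arr1 C f X Y" and t: "arr2 C t f g"
  shows "arr2 D (lift2 a ee mm t) (lift a ee mm f) (lift a ee mm g) \<and>
    rwhisk D (lift2 a ee mm t) (ee X) = lwhisk D (ee Y) (F2 (nsrc a) t) \<and>
    lwhisk D (mm Y) (lift2 a ee mm t) = rwhisk D (F2 (ntgt a) t) (mm X)"
proof -
  have X: "X \<in> Obj C" and Y: "Y \<in> Obj C" using Carr1 f by auto
  have g: "arr1 C g X Y" using C.arr2_arr1[OF t f] .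
  have st: "dom2 C t = f" "cod2 C t = g" using t unfolding arr2_def by auto
  have sX: "src1 C f = X" "tgt1 C f = Y" using f unfolding arr1_def by auto
  have Ff: "arr1 D (F1 (nsrc a) f) (F0 (nsrc a) X) (F0 (nsrc a) Y)" using farr1[OF Fa f] .
  have Gf: "arr1 D (F1 (ntgt a) f) (F0 (ntgt a) X) (F0 (ntgt a) Y)" using farr1[OF Ga f] .
  have Fg: "arr1 D (F1 (nsrc a) g) (F0 (nsrc a) X) (F0 (nsrc a) Y)" using farr1[OF Fa g] .
  have Gg: "arr1 D (F1 (ntgt a) g) (F0 (ntgt a) X) (F0 (ntgt a) Y)" using farr1[OF Ga g] .
  have Ft: "arr2 D (F2 (nsrc a) t) (F1 (nsrc a) f) (F1 (nsrc a) g)" using farr2[OF Fa t] .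
  have Gt: "arr2 D (F2 (ntgt a) t) (F1 (ntgt a) f) (F1 (ntgt a) g)" using farr2[OF Ga t] .
  note eX = eemm(2)[OF X] and eY = eemm(2)[OF Y] and mX = eemm(4)[OF X] and mY = eemm(4)[OF Y]
  have cond: "lwhisk D (mm Y) (lwhisk D (ee Y) (F2 (nsrc a) t)) = rwhisk D (rwhisk D (F2 (ntgt a) t) (mm X)) (ee X)"
  proof -
    have "lwhisk D (mm Y) (lwhisk D (ee Y) (F2 (nsrc a) t)) = lwhisk D (comp1 D (mm Y) (ee Y)) (F2 (nsrc a) t)"
      using D.lw_lw[OF Ff eY mY Ft] .
    also have "\<dots> = lwhisk D (ncmp a Y) (F2 (nsrc a) t)" using aX[OF Y] by simp
    also have "\<dots> = rwhisk D (F2 (ntgt a) t) (ncmp a X)" using n2nat[OF a f t] by simp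
    also have "\<dots> = rwhisk D (F2 (ntgt a) t) (comp1 D (mm X) (ee X))" using aX[OF X] by simp
    also have "\<dots> = rwhisk D (rwhisk D (F2 (ntgt a) t) (mm X)) (ee X)"
      using D.rw_rw[OF eX mX Gf Gt] by simp
    finally show ?thesis .
  qed
  note Lf = L1[OF f] and Lg = L1[OF g]
  have ex: "\<exists>!\<Delta>. arr2 D \<Delta> (lift a ee mm f) (lift a ee mm g) \<and>
      rwhisk D \<Delta> (ee X) = lwhisk D (ee Y) (F2 (nsrc a) t) \<and>
      lwhisk D (mm Y) \<Delta> = rwhisk D (F2 (ntgt a) t) (mm X)"
    apply (rule D_iii[OF eemm(1)[OF X] eemm(3)[OF Y] eX mY D.comp_arr[OF Ff eY] D.comp_arr[OF Fg eY]
       D.comp_arr[OF mX Gf] D.comp_arr[OF mX Gg] sq[OF f] sq[OF g] D.lw_arr[OF Ff eY Ft] D.rw_arr[OF mX Gf Gt] cond])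
    using Lf Lg by blast+
  have "lift2 a ee mm t = (THE \<Delta>. arr2 D \<Delta> (lift a ee mm f) (lift a ee mm g) \<and>
      rwhisk D \<Delta> (ee X) = lwhisk D (ee Y) (F2 (nsrc a) t) \<and>
      lwhisk D (mm Y) \<Delta> = rwhisk D (F2 (ntgt a) t) (mm X))"
    unfolding lift2_def st sX ..
  thus ?thesis using theI'[OF ex] by simp
qed

lemma L2u: assumes f: "arr1 C f X Y" and t: "arr2 C t f g"
  and d: "arr2 D d (lift a ee mm f) (lift a ee mm g)"
  and e: "rwhisk D d (ee X) = lwhisk D (ee Y) (F2 (nsrc a) t)"
  shows "lift2 a ee mm t = d"
proof -
  have X: "X \<in> Obj C" and Y: "Y \<in> Obj C" using Carr1 f by auto
  have g: "arr1 C g X Y" using C.arr2_arr1[OF t f] .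
  show ?thesis using EPI[OF eemm(1)[OF X] eemm(2)[OF X] conjunct1[OF L1[OF f]] conjunct1[OF L1[OF g]]
     conjunct1[OF L2[OF f t]] d] L2[OF f t] e by simp
qed

lemma Hf_simps: "X \<in> Obj C \<Longrightarrow> F0 (Hf a ee mm) X = H0 ee X"
  "f \<in> Hom1 C \<Longrightarrow> F1 (Hf a ee mm) f = lift a ee mm f"
  "t \<in> Hom2 C \<Longrightarrow> F2 (Hf a ee mm) t = lift2 a ee mm t"
  by (simp_all add: Hf_def)

lemma L_id: assumes X: "X \<in> Obj C" shows "lift a ee mm (id1 C X) = id1 D (H0 ee X)"
proof -
  have i: "arr1 C (id1 C X) X X" using C.id1_arr[OF X] .
  note eX = eemm(2)[OF X] and mX = eemm(4)[OF X]
  have h: "H0 ee X \<in> Obj D" using D.arr1_objs[OF eX] by blast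
  show ?thesis
  proof (rule L1u[OF i D.id1_arr[OF h]])
    show "comp1 D (id1 D (H0 ee X)) (ee X) = comp1 D (ee X) (F1 (nsrc a) (id1 C X))"
      using D.comp_id_l[OF eX] D.comp_id_r[OF eX] fid1[OF Fa X] by simp
    show "comp1 D (mm X) (id1 D (H0 ee X)) = comp1 D (F1 (ntgt a) (id1 C X)) (mm X)"
      using D.comp_id_l[OF mX] D.comp_id_r[OF mX] fid1[OF Ga X] by simp
  qed
qed

lemma L_comp: assumes f: "arr1 C f X Y" and g: "arr1 C g Y Z"
  shows "lift a ee mm (comp1 C g f) = comp1 D (lift a ee mm g) (lift a ee mm f)"
proof -
  have X: "X \<in> Obj C" and Y: "Y \<in> Obj C" and Z: "Z \<in> Obj C" using Carr1 f g by auto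
  have gf: "arr1 C (comp1 C g f) X Z" using C.comp_arr[OF f g] .
  have Ff: "arr1 D (F1 (nsrc a) f) (F0 (nsrc a) X) (F0 (nsrc a) Y)" using farr1[OF Fa f] .
  have Gf: "arr1 D (F1 (ntgt a) f) (F0 (ntgt a) X) (F0 (ntgt a) Y)" using farr1[OF Ga f] .
  have Fg: "arr1 D (F1 (nsrc a) g) (F0 (nsrc a) Y) (F0 (nsrc a) Z)" using farr1[OF Fa g] .
  have Gg: "arr1 D (F1 (ntgt a) g) (F0 (ntgt a) Y) (F0 (ntgt a) Z)" using farr1[OF Ga g] .
  note eX = eemm(2)[OF X] and eY = eemm(2)[OF Y] and eZ = eemm(2)[OF Z]
  note mX = eemm(4)[OF X] and mY = eemm(4)[OF Y] and mZ = eemm(4)[OF Z]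
  note Lf = L1[OF f] and Lg = L1[OF g]
  have lf: "arr1 D (lift a ee mm f) (H0 ee X) (H0 ee Y)" using Lf by blast
  have lg: "arr1 D (lift a ee mm g) (H0 ee Y) (H0 ee Z)" using Lg by blast
  show ?thesis
  proof (rule L1u[OF gf D.comp_arr[OF lf lg]])
    have "comp1 D (comp1 D (lift a ee mm g) (lift a ee mm f)) (ee X) = comp1 D (lift a ee mm g) (comp1 D (lift a ee mm f) (ee X))"
      using D.comp_assoc[OF eX lf lg] by simp
    also have "\<dots> = comp1 D (lift a ee mm g) (comp1 D (ee Y) (F1 (nsrc a) f))" using Lf by simp
    also have "\<dots> = comp1 D (comp1 D (lift a ee mm g) (ee Y)) (F1 (nsrc a) f)" using D.comp_assoc[OF Ff eY lg] .
    also have "\<dots> = comp1 D (comp1 D (ee Z) (F1 (nsrc a) g)) (F1 (nsrc a) f)" using Lg by simp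
    also have "\<dots> = comp1 D (ee Z) (comp1 D (F1 (nsrc a) g) (F1 (nsrc a) f))" using D.comp_assoc[OF Ff Fg eZ] by simp
    also have "\<dots> = comp1 D (ee Z) (F1 (nsrc a) (comp1 C g f))" using fcomp[OF Fa f g] by simp
    finally show "comp1 D (comp1 D (lift a ee mm g) (lift a ee mm f)) (ee X) = comp1 D (ee Z) (F1 (nsrc a) (comp1 C g f))" .
    have "comp1 D (mm Z) (comp1 D (lift a ee mm g) (lift a ee mm f)) = comp1 D (comp1 D (mm Z) (lift a ee mm g)) (lift a ee mm f)"
      using D.comp_assoc[OF lf lg mZ] .
    also have "\<dots> = comp1 D (comp1 D (F1 (ntgt a) g) (mm Y)) (lift a ee mm f)" using Lg by simp
    also have "\<dots> = comp1 D (F1 (ntgt a) g) (comp1 D (mm Y) (lift a ee mm f))" using D.comp_assoc[OF lf mY Gg] by simp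
    also have "\<dots> = comp1 D (F1 (ntgt a) g) (comp1 D (F1 (ntgt a) f) (mm X))" using Lf by simp
    also have "\<dots> = comp1 D (comp1 D (F1 (ntgt a) g) (F1 (ntgt a) f)) (mm X)" using D.comp_assoc[OF mX Gf Gg] .
    also have "\<dots> = comp1 D (F1 (ntgt a) (comp1 C g f)) (mm X)" using fcomp[OF Ga f g] by simp
    finally show "comp1 D (mm Z) (comp1 D (lift a ee mm g) (lift a ee mm f)) = comp1 D (F1 (ntgt a) (comp1 C g f)) (mm X)" .
  qed
qed


lemma L2_id: assumes f: "arr1 C f X Y" shows "lift2 a ee mm (id2 C f) = id2 D (lift a ee mm f)"
proof -
  have X: "X \<in> Obj C" and Y: "Y \<in> Obj C" using Carr1 f by auto
  note Lf = L1[OF f]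
  have lf: "arr1 D (lift a ee mm f) (H0 ee X) (H0 ee Y)" using Lf by blast
  have Ff: "arr1 D (F1 (nsrc a) f) (F0 (nsrc a) X) (F0 (nsrc a) Y)" using farr1[OF Fa f] .
  note eX = eemm(2)[OF X] and eY = eemm(2)[OF Y]
  show ?thesis
  proof (rule L2u[OF f C.id2_arr[OF f] D.id2_arr[OF lf]])
    have "rwhisk D (id2 D (lift a ee mm f)) (ee X) = id2 D (comp1 D (lift a ee mm f) (ee X))" using D.rw_id[OF eX lf] .
    also have "\<dots> = id2 D (comp1 D (ee Y) (F1 (nsrc a) f))" using Lf by simp
    also have "\<dots> = lwhisk D (ee Y) (id2 D (F1 (nsrc a) f))" using D.lw_id[OF Ff eY] by simp
    also have "\<dots> = lwhisk D (ee Y) (F2 (nsrc a) (id2 C f))" using fid2[OF Fa C.arr1_Hom[OF f]] by simp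
    finally show "rwhisk D (id2 D (lift a ee mm f)) (ee X) = lwhisk D (ee Y) (F2 (nsrc a) (id2 C f))" .
  qed
qed

lemma L2_vcomp: assumes f: "arr1 C f X Y" and s: "arr2 C s f g" and t: "arr2 C t g h"
  shows "lift2 a ee mm (vcomp C t s) = vcomp D (lift2 a ee mm t) (lift2 a ee mm s)"
proof -
  have X: "X \<in> Obj C" and Y: "Y \<in> Obj C" using Carr1 f by auto
  have g: "arr1 C g X Y" using C.arr2_arr1[OF s f] .
  have Ff: "arr1 D (F1 (nsrc a) f) (F0 (nsrc a) X) (F0 (nsrc a) Y)" using farr1[OF Fa f] .
  note eX = eemm(2)[OF X] and eY = eemm(2)[OF Y]
  have lf: "arr1 D (lift a ee mm f) (H0 ee X) (H0 ee Y)" using L1[OF f] by blast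
  note Ls = L2[OF f s] and Lt = L2[OF g t]
  have ls: "arr2 D (lift2 a ee mm s) (lift a ee mm f) (lift a ee mm g)" using Ls by blast
  have lt: "arr2 D (lift2 a ee mm t) (lift a ee mm g) (lift a ee mm h)" using Lt by blast
  show ?thesis
  proof (rule L2u[OF f C.vcomp_arr[OF s t] D.vcomp_arr[OF ls lt]])
    have "rwhisk D (vcomp D (lift2 a ee mm t) (lift2 a ee mm s)) (ee X) =
       vcomp D (rwhisk D (lift2 a ee mm t) (ee X)) (rwhisk D (lift2 a ee mm s) (ee X))"
      using D.rw_vcomp[OF eX lf ls lt] .
    also have "\<dots> = vcomp D (lwhisk D (ee Y) (F2 (nsrc a) t)) (lwhisk D (ee Y) (F2 (nsrc a) s))" using Ls Lt by simp
    also have "\<dots> = lwhisk D (ee Y) (vcomp D (F2 (nsrc a) t) (F2 (nsrc a) s))"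
      using D.lw_vcomp[OF Ff eY farr2[OF Fa s] farr2[OF Fa t]] by simp
    also have "\<dots> = lwhisk D (ee Y) (F2 (nsrc a) (vcomp C t s))" using fvcomp[OF Fa s t] by simp
    finally show "rwhisk D (vcomp D (lift2 a ee mm t) (lift2 a ee mm s)) (ee X) = lwhisk D (ee Y) (F2 (nsrc a) (vcomp C t s))" .
  qed
qed

lemma L2_hcomp: assumes f: "arr1 C f X Y" and g: "arr1 C g Y Z" and s: "arr2 C s f f'" and t: "arr2 C t g g'"
  shows "lift2 a ee mm (hcomp C t s) = hcomp D (lift2 a ee mm t) (lift2 a ee mm s)"
proof -
  have X: "X \<in> Obj C" and Y: "Y \<in> Obj C" and Z: "Z \<in> Obj C" using Carr1 f g by auto
  have f': "arr1 C f' X Y" using C.arr2_arr1[OF s f] .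
  have g': "arr1 C g' Y Z" using C.arr2_arr1[OF t g] .
  have Ff: "arr1 D (F1 (nsrc a) f) (F0 (nsrc a) X) (F0 (nsrc a) Y)" using farr1[OF Fa f] .
  have Fg: "arr1 D (F1 (nsrc a) g) (F0 (nsrc a) Y) (F0 (nsrc a) Z)" using farr1[OF Fa g] .
  note eX = eemm(2)[OF X] and eY = eemm(2)[OF Y] and eZ = eemm(2)[OF Z]
  have lf: "arr1 D (lift a ee mm f) (H0 ee X) (H0 ee Y)" using L1[OF f] by blast
  have lg: "arr1 D (lift a ee mm g) (H0 ee Y) (H0 ee Z)" using L1[OF g] by blast
  note Ls = L2[OF f s] and Lt = L2[OF g t]
  have ls: "arr2 D (lift2 a ee mm s) (lift a ee mm f) (lift a ee mm f')" using Ls by blast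
  have lt: "arr2 D (lift2 a ee mm t) (lift a ee mm g) (lift a ee mm g')" using Lt by blast
  have hd: "arr2 D (hcomp D (lift2 a ee mm t) (lift2 a ee mm s)) (lift a ee mm (comp1 C g f)) (lift a ee mm (comp1 C g' f'))"
    using D.hcomp_arr[OF lf lg ls lt] L_comp[OF f g] L_comp[OF f' g'] by simp
  show ?thesis
  proof (rule L2u[OF C.comp_arr[OF f g] C.hcomp_arr[OF f g s t] hd])
    have "rwhisk D (hcomp D (lift2 a ee mm t) (lift2 a ee mm s)) (ee X) =
        hcomp D (lift2 a ee mm t) (rwhisk D (lift2 a ee mm s) (ee X))"
      using D.hcomp_rw[OF eX lf lg ls lt] by simp
    also have "\<dots> = hcomp D (lift2 a ee mm t) (lwhisk D (ee Y) (F2 (nsrc a) s))" using Ls by simp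
    also have "\<dots> = hcomp D (rwhisk D (lift2 a ee mm t) (ee Y)) (F2 (nsrc a) s)"
      using D.hcomp_rw_lw[OF Ff eY lg farr2[OF Fa s] lt] by simp
    also have "\<dots> = hcomp D (lwhisk D (ee Z) (F2 (nsrc a) t)) (F2 (nsrc a) s)" using Lt by simp
    also have "\<dots> = lwhisk D (ee Z) (hcomp D (F2 (nsrc a) t) (F2 (nsrc a) s))"
      using D.hcomp_lw[OF Ff Fg eZ farr2[OF Fa s] farr2[OF Fa t]] .
    also have "\<dots> = lwhisk D (ee Z) (F2 (nsrc a) (hcomp C t s))" using fhcomp[OF Fa f g s t] by simp
    finally show "rwhisk D (hcomp D (lift2 a ee mm t) (lift2 a ee mm s)) (ee X) = lwhisk D (ee Z) (F2 (nsrc a) (hcomp C t s))" .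
  qed
qed

lemma Hf_fun: "twofunctor C D (Hf a ee mm)"
  unfolding twofunctor_iff
proof (intro conjI allI impI ballI)
  show "F0 (Hf a ee mm) \<in> extensional (Obj C)" "F1 (Hf a ee mm) \<in> extensional (Hom1 C)"
     "F2 (Hf a ee mm) \<in> extensional (Hom2 C)" by (simp_all add: Hf_def)
next
  fix X assume X: "X \<in> Obj C"
  show "F0 (Hf a ee mm) X \<in> Obj D" using D.arr1_objs[OF eemm(2)[OF X]] Hf_simps X by simp
  show "F1 (Hf a ee mm) (id1 C X) = id1 D (F0 (Hf a ee mm) X)"
    using Hf_simps X C.arr1_Hom[OF C.id1_arr[OF X]] L_id[OF X] by simp
next
  fix f X Y assume f: "arr1 C f X Y"
  have X: "X \<in> Obj C" and Y: "Y \<in> Obj C" using Carr1 f by auto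
  show "arr1 D (F1 (Hf a ee mm) f) (F0 (Hf a ee mm) X) (F0 (Hf a ee mm) Y)"
    using L1[OF f] Hf_simps X Y C.arr1_Hom[OF f] by simp
next
  fix t f g assume t: "arr2 C t f g"
  have f: "arr1 C f (src1 C f) (tgt1 C f)" using C.Hom_arr1 C.arr2_Hom[OF t] by blast
  have g: "arr1 C g (src1 C f) (tgt1 C f)" using C.arr2_arr1[OF t f] .
  show "arr2 D (F2 (Hf a ee mm) t) (F1 (Hf a ee mm) f) (F1 (Hf a ee mm) g)"
    using L2[OF f t] Hf_simps C.arr1_Hom[OF f] C.arr1_Hom[OF g] t unfolding arr2_def by simp
next
  fix f g X Y Z assume f: "arr1 C f X Y" and g: "arr1 C g Y Z"
  show "F1 (Hf a ee mm) (comp1 C g f) = comp1 D (F1 (Hf a ee mm) g) (F1 (Hf a ee mm) f)"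
    using L_comp[OF f g] Hf_simps C.arr1_Hom[OF f] C.arr1_Hom[OF g] C.arr1_Hom[OF C.comp_arr[OF f g]] by simp
next
  fix f assume f0: "f \<in> Hom1 C"
  have f: "arr1 C f (src1 C f) (tgt1 C f)" using C.Hom_arr1 f0 by blast
  show "F2 (Hf a ee mm) (id2 C f) = id2 D (F1 (Hf a ee mm) f)"
    using L2_id[OF f] Hf_simps f0 C.id2_arr[OF f] unfolding arr2_def by simp
next
  fix s t f g h assume s: "arr2 C s f g" and t: "arr2 C t g h"
  have f: "arr1 C f (src1 C f) (tgt1 C f)" using C.Hom_arr1 C.arr2_Hom[OF s] by blast
  show "F2 (Hf a ee mm) (vcomp C t s) = vcomp D (F2 (Hf a ee mm) t) (F2 (Hf a ee mm) s)"
    using L2_vcomp[OF f s t] Hf_simps s t C.vcomp_arr[OF s t] unfolding arr2_def by simp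
next
  fix s t f f' g g' X Y Z assume f: "arr1 C f X Y" and g: "arr1 C g Y Z" and s: "arr2 C s f f'" and t: "arr2 C t g g'"
  show "F2 (Hf a ee mm) (hcomp C t s) = hcomp D (F2 (Hf a ee mm) t) (F2 (Hf a ee mm) s)"
    using L2_hcomp[OF f g s t] Hf_simps s t C.hcomp_arr[OF f g s t] unfolding arr2_def by simp
qed

lemma e_nat: "twonatural C D (nsrc a, Hf a ee mm, \<lambda>X\<in>Obj C. ee X)"
  unfolding twonatural_iff
proof (intro conjI allI impI ballI)
  show "twofunctor C D (nsrc (nsrc a, Hf a ee mm, \<lambda>X\<in>Obj C. ee X))" using Fa by simp
  show "twofunctor C D (ntgt (nsrc a, Hf a ee mm, \<lambda>X\<in>Obj C. ee X))" using Hf_fun by simp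
  show "ncmp (nsrc a, Hf a ee mm, \<lambda>X\<in>Obj C. ee X) \<in> extensional (Obj C)" by simp
next
  fix X assume X: "X \<in> Obj C"
  show "arr1 D (ncmp (nsrc a, Hf a ee mm, \<lambda>X\<in>Obj C. ee X) X)
          (F0 (nsrc (nsrc a, Hf a ee mm, \<lambda>X\<in>Obj C. ee X)) X) (F0 (ntgt (nsrc a, Hf a ee mm, \<lambda>X\<in>Obj C. ee X)) X)"
    using eemm(2)[OF X] X Hf_simps by simp
next
  fix f X Y assume f: "arr1 C f X Y"
  have X: "X \<in> Obj C" and Y: "Y \<in> Obj C" using Carr1 f by auto
  show "comp1 D (F1 (ntgt (nsrc a, Hf a ee mm, \<lambda>X\<in>Obj C. ee X)) f) (ncmp (nsrc a, Hf a ee mm, \<lambda>X\<in>Obj C. ee X) X) =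
        comp1 D (ncmp (nsrc a, Hf a ee mm, \<lambda>X\<in>Obj C. ee X) Y) (F1 (nsrc (nsrc a, Hf a ee mm, \<lambda>X\<in>Obj C. ee X)) f)"
    using L1[OF f] X Y Hf_simps C.arr1_Hom[OF f] by simp
next
  fix t f g X Y assume f: "arr1 C f X Y" and t: "arr2 C t f g"
  have X: "X \<in> Obj C" and Y: "Y \<in> Obj C" using Carr1 f by auto
  show "rwhisk D (F2 (ntgt (nsrc a, Hf a ee mm, \<lambda>X\<in>Obj C. ee X)) t) (ncmp (nsrc a, Hf a ee mm, \<lambda>X\<in>Obj C. ee X) X) =
        lwhisk D (ncmp (nsrc a, Hf a ee mm, \<lambda>X\<in>Obj C. ee X) Y) (F2 (nsrc (nsrc a, Hf a ee mm, \<lambda>X\<in>Obj C. ee X)) t)"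
    using L2[OF f t] X Y Hf_simps t unfolding arr2_def by simp
qed

lemma m_nat: "twonatural C D (Hf a ee mm, ntgt a, \<lambda>X\<in>Obj C. mm X)"
  unfolding twonatural_iff
proof (intro conjI allI impI ballI)
  show "twofunctor C D (nsrc (Hf a ee mm, ntgt a, \<lambda>X\<in>Obj C. mm X))" using Hf_fun by simp
  show "twofunctor C D (ntgt (Hf a ee mm, ntgt a, \<lambda>X\<in>Obj C. mm X))" using Ga by simp
  show "ncmp (Hf a ee mm, ntgt a, \<lambda>X\<in>Obj C. mm X) \<in> extensional (Obj C)" by simp
next
  fix X assume X: "X \<in> Obj C"
  show "arr1 D (ncmp (Hf a ee mm, ntgt a, \<lambda>X\<in>Obj C. mm X) X)
          (F0 (nsrc (Hf a ee mm, ntgt a, \<lambda>X\<in>Obj C. mm X)) X) (F0 (ntgt (Hf a ee mm, ntgt a, \<lambda>X\<in>Obj C. mm X)) X)"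
    using eemm(4)[OF X] X Hf_simps by simp
next
  fix f X Y assume f: "arr1 C f X Y"
  have X: "X \<in> Obj C" and Y: "Y \<in> Obj C" using Carr1 f by auto
  show "comp1 D (F1 (ntgt (Hf a ee mm, ntgt a, \<lambda>X\<in>Obj C. mm X)) f) (ncmp (Hf a ee mm, ntgt a, \<lambda>X\<in>Obj C. mm X) X) =
        comp1 D (ncmp (Hf a ee mm, ntgt a, \<lambda>X\<in>Obj C. mm X) Y) (F1 (nsrc (Hf a ee mm, ntgt a, \<lambda>X\<in>Obj C. mm X)) f)"
    using L1[OF f] X Y Hf_simps C.arr1_Hom[OF f] by simp
next
  fix t f g X Y assume f: "arr1 C f X Y" and t: "arr2 C t f g"
  have X: "X \<in> Obj C" and Y: "Y \<in> Obj C" using Carr1 f by auto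
  show "rwhisk D (F2 (ntgt (Hf a ee mm, ntgt a, \<lambda>X\<in>Obj C. mm X)) t) (ncmp (Hf a ee mm, ntgt a, \<lambda>X\<in>Obj C. mm X) X) =
        lwhisk D (ncmp (Hf a ee mm, ntgt a, \<lambda>X\<in>Obj C. mm X) Y) (F2 (nsrc (Hf a ee mm, ntgt a, \<lambda>X\<in>Obj C. mm X)) t)"
    using L2[OF f t] X Y Hf_simps t unfolding arr2_def by simp
qed

lemma fact_eq: "a = comp1 FC (Hf a ee mm, ntgt a, \<lambda>X\<in>Obj C. mm X) (nsrc a, Hf a ee mm, \<lambda>X\<in>Obj C. ee X)"
proof (rule triple_eq)
  show "ncmp a = ncmp (comp1 FC (Hf a ee mm, ntgt a, \<lambda>X\<in>Obj C. mm X) (nsrc a, Hf a ee mm, \<lambda>X\<in>Obj C. ee X))"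
    using aX nxt[OF a] by (auto intro!: extensionalityI[where A="Obj C"])
qed simp_all

end
end



context S begin

definition pcomp where "pcomp \<epsilon> \<mu> \<alpha> \<alpha>' \<Psi> F' G X = (THE p. case p of (d, P) \<Rightarrow>
   arr1 D d (F0 F' X) (F0 G X) \<and> arr2 D P (ncmp \<alpha>' X) (comp1 D (ncmp \<mu> X) d) \<and> inv2 D P \<and>
   comp1 D d (ncmp \<epsilon> X) = ncmp \<alpha> X \<and> rwhisk D P (ncmp \<epsilon> X) = ncmp \<Psi> X)"

context
  fixes \<epsilon> \<mu> \<alpha> \<alpha>' \<Psi> F F' G G'
  assumes ep: "\<epsilon> \<in> pointwise C D E" and mu: "\<mu> \<in> pointwise C D M"
    and ae: "arr1 FC \<epsilon> F F'" and am: "arr1 FC \<mu> G G'" and aa: "arr1 FC \<alpha> F G" and aa': "arr1 FC \<alpha>' F' G'"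
    and aP: "arr2 FC \<Psi> (comp1 FC \<alpha>' \<epsilon>) (comp1 FC \<mu> \<alpha>)" and iP: "inv2 FC \<Psi>"
begin

lemma nats: "twonatural C D \<epsilon>" "twonatural C D \<mu>" "twonatural C D \<alpha>" "twonatural C D \<alpha>'"
  "nsrc \<epsilon> = F" "ntgt \<epsilon> = F'" "nsrc \<mu> = G" "ntgt \<mu> = G'" "nsrc \<alpha> = F" "ntgt \<alpha> = G"
  "nsrc \<alpha>' = F'" "ntgt \<alpha>' = G'"
  using ae am aa aa' by (auto simp: fc_arr1)

lemma funs: "twofunctor C D F" "twofunctor C D F'" "twofunctor C D G" "twofunctor C D G'"
  using nats nsrcF ntgtF by metis+

lemma Pm: "modification C D \<Psi>" "nsrc \<Psi> = comp1 FC \<alpha>' \<epsilon>" "ntgt \<Psi> = comp1 FC \<mu> \<alpha>"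
  using aP by (auto simp: fc_arr2)

lemma comps: assumes X: "X \<in> Obj C"
  shows "ncmp \<epsilon> X \<in> E" "arr1 D (ncmp \<epsilon> X) (F0 F X) (F0 F' X)"
    "ncmp \<mu> X \<in> M" "arr1 D (ncmp \<mu> X) (F0 G X) (F0 G' X)"
    "arr1 D (ncmp \<alpha> X) (F0 F X) (F0 G X)" "arr1 D (ncmp \<alpha>' X) (F0 F' X) (F0 G' X)"
    "arr2 D (ncmp \<Psi> X) (comp1 D (ncmp \<alpha>' X) (ncmp \<epsilon> X)) (comp1 D (ncmp \<mu> X) (ncmp \<alpha> X))"
    "inv2 D (ncmp \<Psi> X)"
proof -
  show "ncmp \<epsilon> X \<in> E" "ncmp \<mu> X \<in> M" using ep mu X unfolding pointwise_def by auto
  show "arr1 D (ncmp \<epsilon> X) (F0 F X) (F0 F' X)" "arr1 D (ncmp \<mu> X) (F0 G X) (F0 G' X)"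
    "arr1 D (ncmp \<alpha> X) (F0 F X) (F0 G X)" "arr1 D (ncmp \<alpha>' X) (F0 F' X) (F0 G' X)"
    using narr[OF nats(1) X] narr[OF nats(2) X] narr[OF nats(3) X] narr[OF nats(4) X] nats by auto
  show "arr2 D (ncmp \<Psi> X) (comp1 D (ncmp \<alpha>' X) (ncmp \<epsilon> X)) (comp1 D (ncmp \<mu> X) (ncmp \<alpha> X))"
    using marr[OF Pm(1) X] Pm X by simp
  show "inv2 D (ncmp \<Psi> X)" using inv2_FC_D(2)[OF iP X] .
qed

definition "cnd X d P \<longleftrightarrow> arr1 D d (F0 F' X) (F0 G X) \<and> arr2 D P (ncmp \<alpha>' X) (comp1 D (ncmp \<mu> X) d) \<and> inv2 D P \<and>
   comp1 D d (ncmp \<epsilon> X) = ncmp \<alpha> X \<and> rwhisk D P (ncmp \<epsilon> X) = ncmp \<Psi> X"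

lemma cnd_ex1: "X \<in> Obj C \<Longrightarrow> \<exists>!p. case p of (d, P) \<Rightarrow> cnd X d P"
  unfolding cnd_def using D_ii(1)[OF comps(1,3,2,4,5,6,7,8)] by simp

lemma cnd_un: "X \<in> Obj C \<Longrightarrow> cnd X d1 P1 \<Longrightarrow> cnd X d2 P2 \<Longrightarrow> d1 = d2 \<and> P1 = P2"
  unfolding cnd_def using D_ii_un[OF comps(1,3,2,4,5,6,7,8)] by blast

definition "dd X = fst (pcomp \<epsilon> \<mu> \<alpha> \<alpha>' \<Psi> F' G X)"
definition "PP X = snd (pcomp \<epsilon> \<mu> \<alpha> \<alpha>' \<Psi> F' G X)"

lemma dd_PP: "X \<in> Obj C \<Longrightarrow> cnd X (dd X) (PP X)"
proof -
  assume X: "X \<in> Obj C"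
  have "case pcomp \<epsilon> \<mu> \<alpha> \<alpha>' \<Psi> F' G X of (d, P) \<Rightarrow> cnd X d P"
    unfolding pcomp_def cnd_def[symmetric] by (rule theI'[OF cnd_ex1[OF X]])
  thus ?thesis unfolding dd_def PP_def by (simp split: prod.splits)
qed


lemma dd_nat: assumes f: "arr1 C f X Y"
  shows "comp1 D (dd Y) (F1 F' f) = comp1 D (F1 G f) (dd X) \<and>
         rwhisk D (PP Y) (F1 F' f) = lwhisk D (F1 G' f) (PP X)"
proof -
  have X: "X \<in> Obj C" and Y: "Y \<in> Obj C" using Carr1 f by auto
  have Ff: "arr1 D (F1 F f) (F0 F X) (F0 F Y)" using farr1[OF funs(1) f] .
  have F'f: "arr1 D (F1 F' f) (F0 F' X) (F0 F' Y)" using farr1[OF funs(2) f] .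
  have Gf: "arr1 D (F1 G f) (F0 G X) (F0 G Y)" using farr1[OF funs(3) f] .
  have G'f: "arr1 D (F1 G' f) (F0 G' X) (F0 G' Y)" using farr1[OF funs(4) f] .
  note cX = comps[OF X] and cY = comps[OF Y]
  have dX: "cnd X (dd X) (PP X)" and dY: "cnd Y (dd Y) (PP Y)" using dd_PP X Y by auto
  have dXa: "arr1 D (dd X) (F0 F' X) (F0 G X)" "arr2 D (PP X) (ncmp \<alpha>' X) (comp1 D (ncmp \<mu> X) (dd X))"
      "inv2 D (PP X)" "comp1 D (dd X) (ncmp \<epsilon> X) = ncmp \<alpha> X" "rwhisk D (PP X) (ncmp \<epsilon> X) = ncmp \<Psi> X"
    using dX unfolding cnd_def by auto
  have dYa: "arr1 D (dd Y) (F0 F' Y) (F0 G Y)" "arr2 D (PP Y) (ncmp \<alpha>' Y) (comp1 D (ncmp \<mu> Y) (dd Y))"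
      "inv2 D (PP Y)" "comp1 D (dd Y) (ncmp \<epsilon> Y) = ncmp \<alpha> Y" "rwhisk D (PP Y) (ncmp \<epsilon> Y) = ncmp \<Psi> Y"
    using dY unfolding cnd_def by auto
  have en: "comp1 D (F1 F' f) (ncmp \<epsilon> X) = comp1 D (ncmp \<epsilon> Y) (F1 F f)" using nnat[OF nats(1) f] nats by simp
  have an: "comp1 D (F1 G f) (ncmp \<alpha> X) = comp1 D (ncmp \<alpha> Y) (F1 F f)" using nnat[OF nats(3) f] nats by simp
  have a'n: "comp1 D (F1 G' f) (ncmp \<alpha>' X) = comp1 D (ncmp \<alpha>' Y) (F1 F' f)" using nnat[OF nats(4) f] nats by simp
  have mn: "comp1 D (F1 G' f) (ncmp \<mu> X) = comp1 D (ncmp \<mu> Y) (F1 G f)" using nnat[OF nats(2) f] nats by simp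
  have Pn: "lwhisk D (F1 G' f) (ncmp \<Psi> X) = rwhisk D (ncmp \<Psi> Y) (F1 F f)" using mnat[OF Pm(1) f] Pm nats by simp
  let ?A = "comp1 D (ncmp \<alpha> Y) (F1 F f)" and ?A' = "comp1 D (ncmp \<alpha>' Y) (F1 F' f)"
  let ?P = "rwhisk D (ncmp \<Psi> Y) (F1 F f)"
  have A: "arr1 D ?A (F0 F X) (F0 G Y)" using D.comp_arr[OF Ff cY(5)] .
  have A': "arr1 D ?A' (F0 F' X) (F0 G' Y)" using D.comp_arr[OF F'f cY(6)] .
  have e1: "comp1 D (comp1 D (ncmp \<alpha>' Y) (ncmp \<epsilon> Y)) (F1 F f) = comp1 D ?A' (ncmp \<epsilon> X)"
  proof -
    have "comp1 D (comp1 D (ncmp \<alpha>' Y) (ncmp \<epsilon> Y)) (F1 F f) = comp1 D (ncmp \<alpha>' Y) (comp1 D (ncmp \<epsilon> Y) (F1 F f))"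
      using D.comp_assoc[OF Ff cY(2) cY(6)] by simp
    also have "\<dots> = comp1 D (ncmp \<alpha>' Y) (comp1 D (F1 F' f) (ncmp \<epsilon> X))" using en by simp
    also have "\<dots> = comp1 D ?A' (ncmp \<epsilon> X)" using D.comp_assoc[OF cX(2) F'f cY(6)] .
    finally show ?thesis .
  qed
  have e2: "comp1 D (comp1 D (ncmp \<mu> Y) (ncmp \<alpha> Y)) (F1 F f) = comp1 D (ncmp \<mu> Y) ?A"
    using D.comp_assoc[OF Ff cY(5) cY(4)] by simp
  have P: "arr2 D ?P (comp1 D ?A' (ncmp \<epsilon> X)) (comp1 D (ncmp \<mu> Y) ?A)"
    using D.rw_arr[OF Ff D.comp_arr[OF cY(2) cY(6)] cY(7)] e1 e2 by simp
  have Pi: "inv2 D ?P" using D.rw_inv[OF Ff D.comp_arr[OF cY(2) cY(6)] cY(7) cY(8)] .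
  have c1a: "arr1 D (comp1 D (dd Y) (F1 F' f)) (F0 F' X) (F0 G Y)" using D.comp_arr[OF F'f dYa(1)] .
  have c1b: "arr2 D (rwhisk D (PP Y) (F1 F' f)) ?A' (comp1 D (ncmp \<mu> Y) (comp1 D (dd Y) (F1 F' f)))"
    using D.rw_arr[OF F'f cY(6) dYa(2)] D.comp_assoc[OF F'f dYa(1) cY(4)] by simp
  have c1c: "inv2 D (rwhisk D (PP Y) (F1 F' f))" using D.rw_inv[OF F'f cY(6) dYa(2,3)] .
  have c1d: "comp1 D (comp1 D (dd Y) (F1 F' f)) (ncmp \<epsilon> X) = ?A"
  proof -
    have "comp1 D (comp1 D (dd Y) (F1 F' f)) (ncmp \<epsilon> X) = comp1 D (dd Y) (comp1 D (F1 F' f) (ncmp \<epsilon> X))"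
      using D.comp_assoc[OF cX(2) F'f dYa(1)] by simp
    also have "\<dots> = comp1 D (dd Y) (comp1 D (ncmp \<epsilon> Y) (F1 F f))" using en by simp
    also have "\<dots> = comp1 D (comp1 D (dd Y) (ncmp \<epsilon> Y)) (F1 F f)" using D.comp_assoc[OF Ff cY(2) dYa(1)] .
    finally show ?thesis using dYa(4) by simp
  qed
  have c1e: "rwhisk D (rwhisk D (PP Y) (F1 F' f)) (ncmp \<epsilon> X) = ?P"
  proof -
    have "rwhisk D (rwhisk D (PP Y) (F1 F' f)) (ncmp \<epsilon> X) = rwhisk D (PP Y) (comp1 D (F1 F' f) (ncmp \<epsilon> X))"
      using D.rw_rw[OF cX(2) F'f cY(6) dYa(2)] .
    also have "\<dots> = rwhisk D (PP Y) (comp1 D (ncmp \<epsilon> Y) (F1 F f))" using en by simp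
    also have "\<dots> = rwhisk D (rwhisk D (PP Y) (ncmp \<epsilon> Y)) (F1 F f)" using D.rw_rw[OF Ff cY(2) cY(6) dYa(2)] by simp
    finally show ?thesis using dYa(5) by simp
  qed
  have c2a: "arr1 D (comp1 D (F1 G f) (dd X)) (F0 F' X) (F0 G Y)" using D.comp_arr[OF dXa(1) Gf] .
  have mm: "comp1 D (F1 G' f) (comp1 D (ncmp \<mu> X) (dd X)) = comp1 D (ncmp \<mu> Y) (comp1 D (F1 G f) (dd X))"
  proof -
    have "comp1 D (F1 G' f) (comp1 D (ncmp \<mu> X) (dd X)) = comp1 D (comp1 D (F1 G' f) (ncmp \<mu> X)) (dd X)"
      using D.comp_assoc[OF dXa(1) cX(4) G'f] .
    also have "\<dots> = comp1 D (comp1 D (ncmp \<mu> Y) (F1 G f)) (dd X)" using mn by simp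
    also have "\<dots> = comp1 D (ncmp \<mu> Y) (comp1 D (F1 G f) (dd X))" using D.comp_assoc[OF dXa(1) Gf cY(4)] by simp
    finally show ?thesis .
  qed
  have c2b: "arr2 D (lwhisk D (F1 G' f) (PP X)) ?A' (comp1 D (ncmp \<mu> Y) (comp1 D (F1 G f) (dd X)))"
    using D.lw_arr[OF cX(6) G'f dXa(2)] a'n mm by simp
  have c2c: "inv2 D (lwhisk D (F1 G' f) (PP X))" using D.lw_inv[OF cX(6) G'f dXa(2,3)] .
  have c2d: "comp1 D (comp1 D (F1 G f) (dd X)) (ncmp \<epsilon> X) = ?A"
    using D.comp_assoc[OF cX(2) dXa(1) Gf] dXa(4) an by simp
  have c2e: "rwhisk D (lwhisk D (F1 G' f) (PP X)) (ncmp \<epsilon> X) = ?P"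
    using D.lw_rw[OF cX(2) cX(6) G'f dXa(2)] dXa(5) Pn by simp
  show ?thesis
    using D_ii_un[OF cX(1) cY(3) cX(2) cY(4) A A' P Pi c1a c1b c1c c1d c1e c2a c2b c2c c2d c2e] by simp
qed

lemma dd_2nat: assumes f: "arr1 C f X Y" and t: "arr2 C t f g"
  shows "rwhisk D (F2 G t) (dd X) = lwhisk D (dd Y) (F2 F' t)"
proof -
  have X: "X \<in> Obj C" and Y: "Y \<in> Obj C" using Carr1 f by auto
  have g: "arr1 C g X Y" using C.arr2_arr1[OF t f] .
  have Ff: "arr1 D (F1 F f) (F0 F X) (F0 F Y)" using farr1[OF funs(1) f] .
  have F'f: "arr1 D (F1 F' f) (F0 F' X) (F0 F' Y)" using farr1[OF funs(2) f] .
  have Gf: "arr1 D (F1 G f) (F0 G X) (F0 G Y)" using farr1[OF funs(3) f] .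
  have Gg: "arr1 D (F1 G g) (F0 G X) (F0 G Y)" using farr1[OF funs(3) g] .
  have Ft: "arr2 D (F2 F t) (F1 F f) (F1 F g)" using farr2[OF funs(1) t] .
  have F't: "arr2 D (F2 F' t) (F1 F' f) (F1 F' g)" using farr2[OF funs(2) t] .
  have Gt: "arr2 D (F2 G t) (F1 G f) (F1 G g)" using farr2[OF funs(3) t] .
  note cX = comps[OF X] and cY = comps[OF Y]
  have dXa: "arr1 D (dd X) (F0 F' X) (F0 G X)" "comp1 D (dd X) (ncmp \<epsilon> X) = ncmp \<alpha> X"
    using dd_PP[OF X] unfolding cnd_def by auto
  have dYa: "arr1 D (dd Y) (F0 F' Y) (F0 G Y)" "comp1 D (dd Y) (ncmp \<epsilon> Y) = ncmp \<alpha> Y"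
    using dd_PP[OF Y] unfolding cnd_def by auto
  have nf: "comp1 D (dd Y) (F1 F' f) = comp1 D (F1 G f) (dd X)" using dd_nat[OF f] by blast
  have ng: "comp1 D (dd Y) (F1 F' g) = comp1 D (F1 G g) (dd X)" using dd_nat[OF g] by blast
  have a2: "rwhisk D (F2 G t) (ncmp \<alpha> X) = lwhisk D (ncmp \<alpha> Y) (F2 F t)" using n2nat[OF nats(3) f t] nats by simp
  have e2: "rwhisk D (F2 F' t) (ncmp \<epsilon> X) = lwhisk D (ncmp \<epsilon> Y) (F2 F t)" using n2nat[OF nats(1) f t] nats by simp
  have L: "arr2 D (rwhisk D (F2 G t) (dd X)) (comp1 D (F1 G f) (dd X)) (comp1 D (F1 G g) (dd X))"
    using D.rw_arr[OF dXa(1) Gf Gt] .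
  have R: "arr2 D (lwhisk D (dd Y) (F2 F' t)) (comp1 D (F1 G f) (dd X)) (comp1 D (F1 G g) (dd X))"
    using D.lw_arr[OF F'f dYa(1) F't] nf ng by simp
  have "rwhisk D (rwhisk D (F2 G t) (dd X)) (ncmp \<epsilon> X) = lwhisk D (ncmp \<alpha> Y) (F2 F t)"
    using D.rw_rw[OF cX(2) dXa(1) Gf Gt] dXa(2) a2 by simp
  moreover have "rwhisk D (lwhisk D (dd Y) (F2 F' t)) (ncmp \<epsilon> X) = lwhisk D (ncmp \<alpha> Y) (F2 F t)"
  proof -
    have "rwhisk D (lwhisk D (dd Y) (F2 F' t)) (ncmp \<epsilon> X) = lwhisk D (dd Y) (rwhisk D (F2 F' t) (ncmp \<epsilon> X))"
      using D.lw_rw[OF cX(2) F'f dYa(1) F't] by simp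
    also have "\<dots> = lwhisk D (dd Y) (lwhisk D (ncmp \<epsilon> Y) (F2 F t))" using e2 by simp
    also have "\<dots> = lwhisk D (comp1 D (dd Y) (ncmp \<epsilon> Y)) (F2 F t)" using D.lw_lw[OF Ff cY(2) dYa(1) Ft] .
    finally show ?thesis using dYa(2) by simp
  qed
  ultimately show ?thesis
    using EPI[OF cX(1) cX(2) D.comp_arr[OF dXa(1) Gf] D.comp_arr[OF dXa(1) Gg] L R] by simp
qed


definition "del = (F', G, \<lambda>X\<in>Obj C. dd X)"
definition "Pt = (\<alpha>', comp1 FC \<mu> del, \<lambda>X\<in>Obj C. PP X)"

lemma dd_facts: "X \<in> Obj C \<Longrightarrow> arr1 D (dd X) (F0 F' X) (F0 G X) \<and> arr2 D (PP X) (ncmp \<alpha>' X) (comp1 D (ncmp \<mu> X) (dd X)) \<and>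
      inv2 D (PP X) \<and> comp1 D (dd X) (ncmp \<epsilon> X) = ncmp \<alpha> X \<and> rwhisk D (PP X) (ncmp \<epsilon> X) = ncmp \<Psi> X"
  using dd_PP unfolding cnd_def by blast

lemma del_nat: "twonatural C D del"
  unfolding twonatural_iff del_def
proof (intro conjI allI impI ballI)
  show "twofunctor C D (nsrc (F', G, \<lambda>X\<in>Obj C. dd X))" "twofunctor C D (ntgt (F', G, \<lambda>X\<in>Obj C. dd X))"
    using funs by simp_all
  show "ncmp (F', G, \<lambda>X\<in>Obj C. dd X) \<in> extensional (Obj C)" by simp
next
  fix X assume X: "X \<in> Obj C"
  show "arr1 D (ncmp (F', G, \<lambda>X\<in>Obj C. dd X) X) (F0 (nsrc (F', G, \<lambda>X\<in>Obj C. dd X)) X) (F0 (ntgt (F', G, \<lambda>X\<in>Obj C. dd X)) X)"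
    using dd_facts[OF X] X by simp
next
  fix f X Y assume f: "arr1 C f X Y"
  have X: "X \<in> Obj C" and Y: "Y \<in> Obj C" using Carr1 f by auto
  show "comp1 D (F1 (ntgt (F', G, \<lambda>X\<in>Obj C. dd X)) f) (ncmp (F', G, \<lambda>X\<in>Obj C. dd X) X) =
         comp1 D (ncmp (F', G, \<lambda>X\<in>Obj C. dd X) Y) (F1 (nsrc (F', G, \<lambda>X\<in>Obj C. dd X)) f)"
    using dd_nat[OF f] X Y by simp
next
  fix t f g X Y assume f: "arr1 C f X Y" and t: "arr2 C t f g"
  have X: "X \<in> Obj C" and Y: "Y \<in> Obj C" using Carr1 f by auto
  show "rwhisk D (F2 (ntgt (F', G, \<lambda>X\<in>Obj C. dd X)) t) (ncmp (F', G, \<lambda>X\<in>Obj C. dd X) X) =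
         lwhisk D (ncmp (F', G, \<lambda>X\<in>Obj C. dd X) Y) (F2 (nsrc (F', G, \<lambda>X\<in>Obj C. dd X)) t)"
    using dd_2nat[OF f t] X Y by simp
qed

lemma del_simps: "nsrc del = F'" "ntgt del = G" "X \<in> Obj C \<Longrightarrow> ncmp del X = dd X"
  by (simp_all add: del_def)

lemma Pt_mod: "modification C D Pt"
  unfolding modification_iff Pt_def
proof (intro conjI allI impI ballI)
  show "twonatural C D (nsrc (\<alpha>', comp1 FC \<mu> del, \<lambda>X\<in>Obj C. PP X))" using nats by simp
  show "twonatural C D (ntgt (\<alpha>', comp1 FC \<mu> del, \<lambda>X\<in>Obj C. PP X))"
    using comp_nat[OF del_nat nats(2)] del_simps nats by simp
  show "nsrc (nsrc (\<alpha>', comp1 FC \<mu> del, \<lambda>X\<in>Obj C. PP X)) = nsrc (ntgt (\<alpha>', comp1 FC \<mu> del, \<lambda>X\<in>Obj C. PP X))"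
    "ntgt (nsrc (\<alpha>', comp1 FC \<mu> del, \<lambda>X\<in>Obj C. PP X)) = ntgt (ntgt (\<alpha>', comp1 FC \<mu> del, \<lambda>X\<in>Obj C. PP X))"
    using nats del_simps by simp_all
  show "ncmp (\<alpha>', comp1 FC \<mu> del, \<lambda>X\<in>Obj C. PP X) \<in> extensional (Obj C)" by simp
next
  fix X assume X: "X \<in> Obj C"
  show "arr2 D (ncmp (\<alpha>', comp1 FC \<mu> del, \<lambda>X\<in>Obj C. PP X) X) (ncmp (nsrc (\<alpha>', comp1 FC \<mu> del, \<lambda>X\<in>Obj C. PP X)) X)
          (ncmp (ntgt (\<alpha>', comp1 FC \<mu> del, \<lambda>X\<in>Obj C. PP X)) X)"
    using dd_facts[OF X] X del_simps by simp
next
  fix f X Y assume f: "arr1 C f X Y"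
  have X: "X \<in> Obj C" and Y: "Y \<in> Obj C" using Carr1 f by auto
  show "lwhisk D (F1 (ntgt (nsrc (\<alpha>', comp1 FC \<mu> del, \<lambda>X\<in>Obj C. PP X))) f) (ncmp (\<alpha>', comp1 FC \<mu> del, \<lambda>X\<in>Obj C. PP X) X) =
         rwhisk D (ncmp (\<alpha>', comp1 FC \<mu> del, \<lambda>X\<in>Obj C. PP X) Y) (F1 (nsrc (nsrc (\<alpha>', comp1 FC \<mu> del, \<lambda>X\<in>Obj C. PP X))) f)"
    using dd_nat[OF f] X Y nats by simp
qed

lemma Pt_simps: "nsrc Pt = \<alpha>'" "ntgt Pt = comp1 FC \<mu> del" "X \<in> Obj C \<Longrightarrow> ncmp Pt X = PP X"
  by (simp_all add: Pt_def)

lemma Pt_inv: "inv2 FC Pt"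
  using D_inv2_FC[OF Pt_mod] dd_facts Pt_simps by simp

lemma del_eq: "comp1 FC del \<epsilon> = \<alpha>"
proof (rule triple_eq)
  show "ncmp (comp1 FC del \<epsilon>) = ncmp \<alpha>"
    using dd_facts del_simps nxt[OF nats(3)] by (auto intro!: extensionalityI[where A="Obj C"])
qed (simp_all add: nats del_simps)

lemma Pt_eq: "rwhisk FC Pt \<epsilon> = \<Psi>"
proof (rule triple_eq)
  show "nsrc (rwhisk FC Pt \<epsilon>) = nsrc \<Psi>" using Pm Pt_simps by simp
  have "comp1 FC (comp1 FC \<mu> del) \<epsilon> = comp1 FC \<mu> \<alpha>"
  proof (rule triple_eq)
    show "ncmp (comp1 FC (comp1 FC \<mu> del) \<epsilon>) = ncmp (comp1 FC \<mu> \<alpha>)"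
    proof (rule extensionalityI[where A="Obj C"])
      fix X assume X: "X \<in> Obj C"
      have "comp1 D (comp1 D (ncmp \<mu> X) (dd X)) (ncmp \<epsilon> X) = comp1 D (ncmp \<mu> X) (comp1 D (dd X) (ncmp \<epsilon> X))"
        using D.comp_assoc[OF comps(2)[OF X] conjunct1[OF dd_facts[OF X]] comps(4)[OF X]] by simp
      thus "ncmp (comp1 FC (comp1 FC \<mu> del) \<epsilon>) X = ncmp (comp1 FC \<mu> \<alpha>) X"
        using X dd_facts[OF X] del_simps by simp
    qed simp_all
  qed (simp_all add: nats del_simps)
  thus "ntgt (rwhisk FC Pt \<epsilon>) = ntgt \<Psi>" using Pm Pt_simps by simp
  show "ncmp (rwhisk FC Pt \<epsilon>) = ncmp \<Psi>"
    using dd_facts Pt_simps mext[OF Pm(1)] by (auto intro!: extensionalityI[where A="Obj C"])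
qed

lemma cond_comps:
  assumes "arr1 FC d2 F' G" "arr2 FC P2 \<alpha>' (comp1 FC \<mu> d2)" "inv2 FC P2" "comp1 FC d2 \<epsilon> = \<alpha>" "rwhisk FC P2 \<epsilon> = \<Psi>"
    and X: "X \<in> Obj C"
  shows "cnd X (ncmp d2 X) (ncmp P2 X)"
proof -
  have d: "twonatural C D d2" "nsrc d2 = F'" "ntgt d2 = G" using assms(1) by (auto simp: fc_arr1)
  have p: "modification C D P2" "nsrc P2 = \<alpha>'" "ntgt P2 = comp1 FC \<mu> d2" using assms(2) by (auto simp: fc_arr2)
  have 1: "arr1 D (ncmp d2 X) (F0 F' X) (F0 G X)" using narr[OF d(1) X] d by simp
  have 2: "arr2 D (ncmp P2 X) (ncmp \<alpha>' X) (comp1 D (ncmp \<mu> X) (ncmp d2 X))" using marr[OF p(1) X] p X by simp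
  have 3: "inv2 D (ncmp P2 X)" using inv2_FC_D(2)[OF assms(3) X] .
  have 4: "comp1 D (ncmp d2 X) (ncmp \<epsilon> X) = ncmp \<alpha> X" using arg_cong[OF assms(4), of "\<lambda>x. ncmp x X"] X by simp
  have 5: "rwhisk D (ncmp P2 X) (ncmp \<epsilon> X) = ncmp \<Psi> X" using arg_cong[OF assms(5), of "\<lambda>x. ncmp x X"] X by simp
  show ?thesis unfolding cnd_def using 1 2 3 4 5 by blast
qed

lemma FC_uniq:
  assumes "arr1 FC d2 F' G" "arr2 FC P2 \<alpha>' (comp1 FC \<mu> d2)" "inv2 FC P2" "comp1 FC d2 \<epsilon> = \<alpha>" "rwhisk FC P2 \<epsilon> = \<Psi>"
  shows "d2 = del \<and> P2 = Pt"
proof -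
  have d: "twonatural C D d2" "nsrc d2 = F'" "ntgt d2 = G" using assms(1) by (auto simp: fc_arr1)
  have p: "modification C D P2" "nsrc P2 = \<alpha>'" "ntgt P2 = comp1 FC \<mu> d2" using assms(2) by (auto simp: fc_arr2)
  have eq: "\<And>X. X \<in> Obj C \<Longrightarrow> ncmp d2 X = dd X \<and> ncmp P2 X = PP X"
    using cnd_un cond_comps[OF assms] dd_PP by blast
  have dd2: "d2 = del"
  proof (rule triple_eq)
    show "ncmp d2 = ncmp del" using eq nxt[OF d(1)] del_simps
      by (auto intro!: extensionalityI[where A="Obj C"] simp: del_def)
  qed (simp_all add: d del_simps)
  moreover have "P2 = Pt"
  proof (rule triple_eq)
    show "ncmp P2 = ncmp Pt" using eq mext[OF p(1)]
      by (auto intro!: extensionalityI[where A="Obj C"] simp: Pt_def)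
  qed (simp_all add: p Pt_simps dd2)
  ultimately show ?thesis by blast
qed

lemma FC_ex1: "\<exists>!(d2, P2). arr1 FC d2 F' G \<and> arr2 FC P2 \<alpha>' (comp1 FC \<mu> d2) \<and> inv2 FC P2 \<and>
                     comp1 FC d2 \<epsilon> = \<alpha> \<and> rwhisk FC P2 \<epsilon> = \<Psi>"
proof (rule ex1I[of _ "(del, Pt)"])
  show "case (del, Pt) of (d2, P2) \<Rightarrow> arr1 FC d2 F' G \<and> arr2 FC P2 \<alpha>' (comp1 FC \<mu> d2) \<and> inv2 FC P2 \<and>
                     comp1 FC d2 \<epsilon> = \<alpha> \<and> rwhisk FC P2 \<epsilon> = \<Psi>"
    using del_nat del_simps Pt_mod Pt_simps Pt_inv del_eq Pt_eq by (simp add: fc_arr1 fc_arr2 del: fc_simps)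
next
  fix p assume "case p of (d2, P2) \<Rightarrow> arr1 FC d2 F' G \<and> arr2 FC P2 \<alpha>' (comp1 FC \<mu> d2) \<and> inv2 FC P2 \<and>
                     comp1 FC d2 \<epsilon> = \<alpha> \<and> rwhisk FC P2 \<epsilon> = \<Psi>"
  thus "p = (del, Pt)" using FC_uniq by (cases p) auto
qed

lemma FC_id:
  assumes "\<Psi> = id2 FC (comp1 FC \<alpha>' \<epsilon>)"
    and "arr1 FC d2 F' G" "arr2 FC P2 \<alpha>' (comp1 FC \<mu> d2)" "inv2 FC P2" "comp1 FC d2 \<epsilon> = \<alpha>" "rwhisk FC P2 \<epsilon> = \<Psi>"
  shows "comp1 FC \<mu> d2 = \<alpha>' \<and> P2 = id2 FC \<alpha>'"
proof -
  have d: "twonatural C D d2" "nsrc d2 = F'" "ntgt d2 = G" using assms(2) by (auto simp: fc_arr1)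
  have p: "modification C D P2" "nsrc P2 = \<alpha>'" "ntgt P2 = comp1 FC \<mu> d2" using assms(3) by (auto simp: fc_arr2)
  have c: "\<And>X. X \<in> Obj C \<Longrightarrow> comp1 D (ncmp \<mu> X) (ncmp d2 X) = ncmp \<alpha>' X \<and> ncmp P2 X = id2 D (ncmp \<alpha>' X)"
  proof -
    fix X assume X: "X \<in> Obj C"
    have cc: "cnd X (ncmp d2 X) (ncmp P2 X)" using cond_comps[OF assms(2-) X] .
    have "ncmp \<Psi> X = id2 D (comp1 D (ncmp \<alpha>' X) (ncmp \<epsilon> X))" using assms(1) X by simp
    thus "comp1 D (ncmp \<mu> X) (ncmp d2 X) = ncmp \<alpha>' X \<and> ncmp P2 X = id2 D (ncmp \<alpha>' X)"
      using D_ii(2)[OF comps(1,3,2,4,5,6,7,8)[OF X]] cc unfolding cnd_def by blast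
  qed
  have 1: "comp1 FC \<mu> d2 = \<alpha>'"
  proof (rule triple_eq)
    show "ncmp (comp1 FC \<mu> d2) = ncmp \<alpha>'" using c nxt[OF nats(4)]
      by (auto intro!: extensionalityI[where A="Obj C"])
  qed (simp_all add: d nats)
  moreover have "P2 = id2 FC \<alpha>'"
  proof (rule triple_eq)
    show "ncmp P2 = ncmp (id2 FC \<alpha>')" using c mext[OF p(1)]
      by (auto intro!: extensionalityI[where A="Obj C"])
  qed (simp_all add: p(1,2) p(3)[unfolded 1])
  ultimately show ?thesis by blast
qed

end
end



context S begin

definition pc3 where "pc3 \<epsilon> \<mu> \<Phi> \<Phi>' \<delta>1 \<delta>2 X = (THE \<Delta>. arr2 D \<Delta> (ncmp \<delta>1 X) (ncmp \<delta>2 X) \<and>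
   rwhisk D \<Delta> (ncmp \<epsilon> X) = ncmp \<Phi> X \<and> lwhisk D (ncmp \<mu> X) \<Delta> = ncmp \<Phi>' X)"

context
  fixes \<epsilon> \<mu> F F' G G' \<alpha>1 \<alpha>2 \<alpha>1' \<alpha>2' \<Phi> \<Phi>' \<delta>1 \<delta>2
  assumes ep: "\<epsilon> \<in> pointwise C D E" and mu: "\<mu> \<in> pointwise C D M"
    and ae: "arr1 FC \<epsilon> F F'" and am: "arr1 FC \<mu> G G'"
    and a1: "arr1 FC \<alpha>1 F G" and a2: "arr1 FC \<alpha>2 F G" and a1': "arr1 FC \<alpha>1' F' G'" and a2': "arr1 FC \<alpha>2' F' G'"
    and s1: "comp1 FC \<alpha>1' \<epsilon> = comp1 FC \<mu> \<alpha>1" and s2: "comp1 FC \<alpha>2' \<epsilon> = comp1 FC \<mu> \<alpha>2"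
    and aF: "arr2 FC \<Phi> \<alpha>1 \<alpha>2" and aF': "arr2 FC \<Phi>' \<alpha>1' \<alpha>2'" and wF: "lwhisk FC \<mu> \<Phi> = rwhisk FC \<Phi>' \<epsilon>"
    and d1: "arr1 FC \<delta>1 F' G" and d1e: "comp1 FC \<delta>1 \<epsilon> = \<alpha>1" and d1m: "comp1 FC \<mu> \<delta>1 = \<alpha>1'"
    and d2: "arr1 FC \<delta>2 F' G" and d2e: "comp1 FC \<delta>2 \<epsilon> = \<alpha>2" and d2m: "comp1 FC \<mu> \<delta>2 = \<alpha>2'"
begin

lemma nats3: "twonatural C D \<epsilon>" "twonatural C D \<mu>" "twonatural C D \<delta>1" "twonatural C D \<delta>2"
  "nsrc \<epsilon> = F" "ntgt \<epsilon> = F'" "nsrc \<mu> = G" "ntgt \<mu> = G'" "nsrc \<delta>1 = F'" "ntgt \<delta>1 = G"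
  "nsrc \<delta>2 = F'" "ntgt \<delta>2 = G"
  "twonatural C D \<alpha>1" "twonatural C D \<alpha>2" "twonatural C D \<alpha>1'" "twonatural C D \<alpha>2'"
  "nsrc \<alpha>1 = F" "ntgt \<alpha>1 = G" "nsrc \<alpha>2 = F" "ntgt \<alpha>2 = G"
  "nsrc \<alpha>1' = F'" "ntgt \<alpha>1' = G'" "nsrc \<alpha>2' = F'" "ntgt \<alpha>2' = G'"
  using ae am d1 d2 a1 a2 a1' a2' by (auto simp: fc_arr1)

lemma mods3: "modification C D \<Phi>" "nsrc \<Phi> = \<alpha>1" "ntgt \<Phi> = \<alpha>2"
  "modification C D \<Phi>'" "nsrc \<Phi>' = \<alpha>1'" "ntgt \<Phi>' = \<alpha>2'"
  using aF aF' by (auto simp: fc_arr2)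

lemma funs3: "twofunctor C D F" "twofunctor C D F'" "twofunctor C D G" "twofunctor C D G'"
  using nats3 nsrcF ntgtF by metis+

lemma cmp3: assumes X: "X \<in> Obj C"
  shows "ncmp \<epsilon> X \<in> E" "arr1 D (ncmp \<epsilon> X) (F0 F X) (F0 F' X)"
    "ncmp \<mu> X \<in> M" "arr1 D (ncmp \<mu> X) (F0 G X) (F0 G' X)"
    "arr1 D (ncmp \<alpha>1 X) (F0 F X) (F0 G X)" "arr1 D (ncmp \<alpha>2 X) (F0 F X) (F0 G X)"
    "arr1 D (ncmp \<alpha>1' X) (F0 F' X) (F0 G' X)" "arr1 D (ncmp \<alpha>2' X) (F0 F' X) (F0 G' X)"
    "comp1 D (ncmp \<alpha>1' X) (ncmp \<epsilon> X) = comp1 D (ncmp \<mu> X) (ncmp \<alpha>1 X)"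
    "comp1 D (ncmp \<alpha>2' X) (ncmp \<epsilon> X) = comp1 D (ncmp \<mu> X) (ncmp \<alpha>2 X)"
    "arr2 D (ncmp \<Phi> X) (ncmp \<alpha>1 X) (ncmp \<alpha>2 X)" "arr2 D (ncmp \<Phi>' X) (ncmp \<alpha>1' X) (ncmp \<alpha>2' X)"
    "lwhisk D (ncmp \<mu> X) (ncmp \<Phi> X) = rwhisk D (ncmp \<Phi>' X) (ncmp \<epsilon> X)"
    "arr1 D (ncmp \<delta>1 X) (F0 F' X) (F0 G X)" "comp1 D (ncmp \<delta>1 X) (ncmp \<epsilon> X) = ncmp \<alpha>1 X"
    "comp1 D (ncmp \<mu> X) (ncmp \<delta>1 X) = ncmp \<alpha>1' X"
    "arr1 D (ncmp \<delta>2 X) (F0 F' X) (F0 G X)" "comp1 D (ncmp \<delta>2 X) (ncmp \<epsilon> X) = ncmp \<alpha>2 X"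
    "comp1 D (ncmp \<mu> X) (ncmp \<delta>2 X) = ncmp \<alpha>2' X"
proof -
  show "ncmp \<epsilon> X \<in> E" "ncmp \<mu> X \<in> M" using ep mu X unfolding pointwise_def by auto
  show "arr1 D (ncmp \<epsilon> X) (F0 F X) (F0 F' X)" "arr1 D (ncmp \<mu> X) (F0 G X) (F0 G' X)"
    "arr1 D (ncmp \<alpha>1 X) (F0 F X) (F0 G X)" "arr1 D (ncmp \<alpha>2 X) (F0 F X) (F0 G X)"
    "arr1 D (ncmp \<alpha>1' X) (F0 F' X) (F0 G' X)" "arr1 D (ncmp \<alpha>2' X) (F0 F' X) (F0 G' X)"
    "arr1 D (ncmp \<delta>1 X) (F0 F' X) (F0 G X)" "arr1 D (ncmp \<delta>2 X) (F0 F' X) (F0 G X)"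
    using narr[OF nats3(1) X] narr[OF nats3(2) X] narr[OF nats3(13) X] narr[OF nats3(14) X]
      narr[OF nats3(15) X] narr[OF nats3(16) X] narr[OF nats3(3) X] narr[OF nats3(4) X] nats3 by auto
  show "comp1 D (ncmp \<alpha>1' X) (ncmp \<epsilon> X) = comp1 D (ncmp \<mu> X) (ncmp \<alpha>1 X)"
    using arg_cong[OF s1, of "\<lambda>x. ncmp x X"] X by simp
  show "comp1 D (ncmp \<alpha>2' X) (ncmp \<epsilon> X) = comp1 D (ncmp \<mu> X) (ncmp \<alpha>2 X)"
    using arg_cong[OF s2, of "\<lambda>x. ncmp x X"] X by simp
  show "arr2 D (ncmp \<Phi> X) (ncmp \<alpha>1 X) (ncmp \<alpha>2 X)" "arr2 D (ncmp \<Phi>' X) (ncmp \<alpha>1' X) (ncmp \<alpha>2' X)"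
    using marr[OF mods3(1) X] marr[OF mods3(4) X] mods3 by auto
  show "lwhisk D (ncmp \<mu> X) (ncmp \<Phi> X) = rwhisk D (ncmp \<Phi>' X) (ncmp \<epsilon> X)"
    using arg_cong[OF wF, of "\<lambda>x. ncmp x X"] X by simp
  show "comp1 D (ncmp \<delta>1 X) (ncmp \<epsilon> X) = ncmp \<alpha>1 X" using arg_cong[OF d1e, of "\<lambda>x. ncmp x X"] X by simp
  show "comp1 D (ncmp \<mu> X) (ncmp \<delta>1 X) = ncmp \<alpha>1' X" using arg_cong[OF d1m, of "\<lambda>x. ncmp x X"] X by simp
  show "comp1 D (ncmp \<delta>2 X) (ncmp \<epsilon> X) = ncmp \<alpha>2 X" using arg_cong[OF d2e, of "\<lambda>x. ncmp x X"] X by simp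
  show "comp1 D (ncmp \<mu> X) (ncmp \<delta>2 X) = ncmp \<alpha>2' X" using arg_cong[OF d2m, of "\<lambda>x. ncmp x X"] X by simp
qed

lemma ex3: "X \<in> Obj C \<Longrightarrow> \<exists>!\<Delta>. arr2 D \<Delta> (ncmp \<delta>1 X) (ncmp \<delta>2 X) \<and>
   rwhisk D \<Delta> (ncmp \<epsilon> X) = ncmp \<Phi> X \<and> lwhisk D (ncmp \<mu> X) \<Delta> = ncmp \<Phi>' X"
  by (rule D_iii[OF cmp3(1,3,2,4,5,6,7,8,9,10,11,12,13,14,15,16,17,18,19)])

definition "DD X = pc3 \<epsilon> \<mu> \<Phi> \<Phi>' \<delta>1 \<delta>2 X"

lemma DD: "X \<in> Obj C \<Longrightarrow> arr2 D (DD X) (ncmp \<delta>1 X) (ncmp \<delta>2 X) \<and>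
   rwhisk D (DD X) (ncmp \<epsilon> X) = ncmp \<Phi> X \<and> lwhisk D (ncmp \<mu> X) (DD X) = ncmp \<Phi>' X"
  unfolding DD_def pc3_def by (rule theI'[OF ex3])

definition "Dl = (\<delta>1, \<delta>2, \<lambda>X\<in>Obj C. DD X)"

lemma Dl_mod: "modification C D Dl"
  unfolding modification_iff Dl_def
proof (intro conjI allI impI ballI)
  show "twonatural C D (nsrc (\<delta>1, \<delta>2, \<lambda>X\<in>Obj C. DD X))" "twonatural C D (ntgt (\<delta>1, \<delta>2, \<lambda>X\<in>Obj C. DD X))"
    using nats3 by simp_all
  show "nsrc (nsrc (\<delta>1, \<delta>2, \<lambda>X\<in>Obj C. DD X)) = nsrc (ntgt (\<delta>1, \<delta>2, \<lambda>X\<in>Obj C. DD X))"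
    "ntgt (nsrc (\<delta>1, \<delta>2, \<lambda>X\<in>Obj C. DD X)) = ntgt (ntgt (\<delta>1, \<delta>2, \<lambda>X\<in>Obj C. DD X))" using nats3 by simp_all
  show "ncmp (\<delta>1, \<delta>2, \<lambda>X\<in>Obj C. DD X) \<in> extensional (Obj C)" by simp
next
  fix X assume X: "X \<in> Obj C"
  show "arr2 D (ncmp (\<delta>1, \<delta>2, \<lambda>X\<in>Obj C. DD X) X) (ncmp (nsrc (\<delta>1, \<delta>2, \<lambda>X\<in>Obj C. DD X)) X)
      (ncmp (ntgt (\<delta>1, \<delta>2, \<lambda>X\<in>Obj C. DD X)) X)" using DD[OF X] X by simp
next
  fix f X Y assume f: "arr1 C f X Y"
  have X: "X \<in> Obj C" and Y: "Y \<in> Obj C" using Carr1 f by auto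
  have Ff: "arr1 D (F1 F f) (F0 F X) (F0 F Y)" using farr1[OF funs3(1) f] .
  have F'f: "arr1 D (F1 F' f) (F0 F' X) (F0 F' Y)" using farr1[OF funs3(2) f] .
  have Gf: "arr1 D (F1 G f) (F0 G X) (F0 G Y)" using farr1[OF funs3(3) f] .
  note cX = cmp3[OF X] and cY = cmp3[OF Y]
  have en: "comp1 D (F1 F' f) (ncmp \<epsilon> X) = comp1 D (ncmp \<epsilon> Y) (F1 F f)" using nnat[OF nats3(1) f] nats3 by simp
  have n1: "comp1 D (F1 G f) (ncmp \<delta>1 X) = comp1 D (ncmp \<delta>1 Y) (F1 F' f)" using nnat[OF nats3(3) f] nats3 by simp
  have n2: "comp1 D (F1 G f) (ncmp \<delta>2 X) = comp1 D (ncmp \<delta>2 Y) (F1 F' f)" using nnat[OF nats3(4) f] nats3 by simp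
  have Pn: "lwhisk D (F1 G f) (ncmp \<Phi> X) = rwhisk D (ncmp \<Phi> Y) (F1 F f)" using mnat[OF mods3(1) f] mods3 nats3 by simp
  note DX = DD[OF X] and DY = DD[OF Y]
  have L: "arr2 D (lwhisk D (F1 G f) (DD X)) (comp1 D (F1 G f) (ncmp \<delta>1 X)) (comp1 D (F1 G f) (ncmp \<delta>2 X))"
    using D.lw_arr[OF cX(14) Gf] DX by blast
  have R: "arr2 D (rwhisk D (DD Y) (F1 F' f)) (comp1 D (F1 G f) (ncmp \<delta>1 X)) (comp1 D (F1 G f) (ncmp \<delta>2 X))"
    using D.rw_arr[OF F'f cY(14)] DY n1 n2 by simp
  have "rwhisk D (lwhisk D (F1 G f) (DD X)) (ncmp \<epsilon> X) = rwhisk D (ncmp \<Phi> Y) (F1 F f)"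
    using D.lw_rw[OF cX(2) cX(14) Gf, of "DD X" "ncmp \<delta>2 X"] DX Pn by simp
  moreover have "rwhisk D (rwhisk D (DD Y) (F1 F' f)) (ncmp \<epsilon> X) = rwhisk D (ncmp \<Phi> Y) (F1 F f)"
  proof -
    have "rwhisk D (rwhisk D (DD Y) (F1 F' f)) (ncmp \<epsilon> X) = rwhisk D (DD Y) (comp1 D (F1 F' f) (ncmp \<epsilon> X))"
      using D.rw_rw[OF cX(2) F'f cY(14), of "DD Y" "ncmp \<delta>2 Y"] DY by simp
    also have "\<dots> = rwhisk D (DD Y) (comp1 D (ncmp \<epsilon> Y) (F1 F f))" using en by simp
    also have "\<dots> = rwhisk D (rwhisk D (DD Y) (ncmp \<epsilon> Y)) (F1 F f)"
      using D.rw_rw[OF Ff cY(2) cY(14), of "DD Y" "ncmp \<delta>2 Y"] DY by simp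
    finally show ?thesis using DY by simp
  qed
  ultimately have "lwhisk D (F1 G f) (DD X) = rwhisk D (DD Y) (F1 F' f)"
    using EPI[OF cX(1) cX(2) D.comp_arr[OF cX(14) Gf] D.comp_arr[OF cX(17) Gf] L R] by simp
  thus "lwhisk D (F1 (ntgt (nsrc (\<delta>1, \<delta>2, \<lambda>X\<in>Obj C. DD X))) f) (ncmp (\<delta>1, \<delta>2, \<lambda>X\<in>Obj C. DD X) X) =
         rwhisk D (ncmp (\<delta>1, \<delta>2, \<lambda>X\<in>Obj C. DD X) Y) (F1 (nsrc (nsrc (\<delta>1, \<delta>2, \<lambda>X\<in>Obj C. DD X))) f)"
    using X Y nats3 by simp
qed

lemma FC_iii: "\<exists>!\<Delta>. arr2 FC \<Delta> \<delta>1 \<delta>2 \<and> rwhisk FC \<Delta> \<epsilon> = \<Phi> \<and> lwhisk FC \<mu> \<Delta> = \<Phi>'"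
proof (rule ex1I[of _ Dl])
  have r: "rwhisk FC Dl \<epsilon> = \<Phi>"
  proof (rule triple_eq)
    show "ncmp (rwhisk FC Dl \<epsilon>) = ncmp \<Phi>" using DD mext[OF mods3(1)]
      by (auto intro!: extensionalityI[where A="Obj C"] simp: Dl_def)
  qed (simp_all add: Dl_def d1e d2e mods3 del: fc_simps)
  have l: "lwhisk FC \<mu> Dl = \<Phi>'"
  proof (rule triple_eq)
    show "ncmp (lwhisk FC \<mu> Dl) = ncmp \<Phi>'" using DD mext[OF mods3(4)]
      by (auto intro!: extensionalityI[where A="Obj C"] simp: Dl_def)
  qed (simp_all add: Dl_def d1m d2m mods3 del: fc_simps)
  show "arr2 FC Dl \<delta>1 \<delta>2 \<and> rwhisk FC Dl \<epsilon> = \<Phi> \<and> lwhisk FC \<mu> Dl = \<Phi>'"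
    using Dl_mod r l by (simp add: fc_arr2 Dl_def del: fc_simps fc_rw fc_lw)
next
  fix Q assume Q: "arr2 FC Q \<delta>1 \<delta>2 \<and> rwhisk FC Q \<epsilon> = \<Phi> \<and> lwhisk FC \<mu> Q = \<Phi>'"
  have q: "modification C D Q" "nsrc Q = \<delta>1" "ntgt Q = \<delta>2" using Q by (auto simp: fc_arr2)
  have c: "\<And>X. X \<in> Obj C \<Longrightarrow> ncmp Q X = DD X"
  proof -
    fix X assume X: "X \<in> Obj C"
    have "arr2 D (ncmp Q X) (ncmp \<delta>1 X) (ncmp \<delta>2 X)" using marr[OF q(1) X] q by simp
    moreover have "rwhisk D (ncmp Q X) (ncmp \<epsilon> X) = ncmp \<Phi> X"
      using arg_cong[OF conjunct1[OF conjunct2[OF Q]], of "\<lambda>x. ncmp x X"] X by simp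
    moreover have "lwhisk D (ncmp \<mu> X) (ncmp Q X) = ncmp \<Phi>' X"
      using arg_cong[OF conjunct2[OF conjunct2[OF Q]], of "\<lambda>x. ncmp x X"] X by simp
    ultimately show "ncmp Q X = DD X" using ex3[OF X] DD[OF X] by blast
  qed
  show "Q = Dl"
  proof (rule triple_eq)
    show "ncmp Q = ncmp Dl" using c mext[OF q(1)] by (auto intro!: extensionalityI[where A="Obj C"] simp: Dl_def)
  qed (simp_all add: q Dl_def)
qed

end
end



context S begin

definition RRc where "RRc \<mu> \<alpha> \<theta> F X = (THE \<rho>. arr2 D \<rho> (comp1 D (ncmp \<alpha> X) (ncmp \<mu> X)) (id1 D (F0 F X)) \<and>
    inv2 D \<rho> \<and> lwhisk D (ncmp \<mu> X) \<rho> = rwhisk D (ncmp \<theta> X) (ncmp \<mu> X))"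

context
  fixes \<mu> \<alpha> \<theta> F G
  assumes mu: "\<mu> \<in> pointwise C D M" and am: "arr1 FC \<mu> F G" and aa: "arr1 FC \<alpha> G F"
    and th: "arr2 FC \<theta> (comp1 FC \<mu> \<alpha>) (id1 FC G)" and ith: "inv2 FC \<theta>"
begin

lemma natsR: "twonatural C D \<mu>" "twonatural C D \<alpha>" "nsrc \<mu> = F" "ntgt \<mu> = G" "nsrc \<alpha> = G" "ntgt \<alpha> = F"
  using am aa by (auto simp: fc_arr1)
lemma thmod: "modification C D \<theta>" "nsrc \<theta> = comp1 FC \<mu> \<alpha>" "ntgt \<theta> = id1 FC G"
  using th by (auto simp: fc_arr2)
lemma funsR: "twofunctor C D F" "twofunctor C D G" using natsR nsrcF ntgtF by metis+

lemma cR: assumes X: "X \<in> Obj C"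
  shows "ncmp \<mu> X \<in> M" "arr1 D (ncmp \<mu> X) (F0 F X) (F0 G X)" "arr1 D (ncmp \<alpha> X) (F0 G X) (F0 F X)"
    "arr2 D (ncmp \<theta> X) (comp1 D (ncmp \<mu> X) (ncmp \<alpha> X)) (id1 D (F0 G X))" "inv2 D (ncmp \<theta> X)"
proof -
  show "ncmp \<mu> X \<in> M" using mu X unfolding pointwise_def by auto
  show "arr1 D (ncmp \<mu> X) (F0 F X) (F0 G X)" "arr1 D (ncmp \<alpha> X) (F0 G X) (F0 F X)"
    using narr[OF natsR(1) X] narr[OF natsR(2) X] natsR by auto
  show "arr2 D (ncmp \<theta> X) (comp1 D (ncmp \<mu> X) (ncmp \<alpha> X)) (id1 D (F0 G X))" using marr[OF thmod(1) X] thmod X by simp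
  show "inv2 D (ncmp \<theta> X)" using inv2_FC_D(2)[OF ith X] .
qed

lemma PsiR: assumes X: "X \<in> Obj C"
  shows "arr2 D (rwhisk D (ncmp \<theta> X) (ncmp \<mu> X)) (comp1 D (ncmp \<mu> X) (comp1 D (ncmp \<alpha> X) (ncmp \<mu> X)))
     (comp1 D (ncmp \<mu> X) (id1 D (F0 F X)))" "inv2 D (rwhisk D (ncmp \<theta> X) (ncmp \<mu> X))"
proof -
  note c = cR[OF X]
  have ma: "arr1 D (comp1 D (ncmp \<mu> X) (ncmp \<alpha> X)) (F0 G X) (F0 G X)" using D.comp_arr[OF c(3) c(2)] .
  have "arr2 D (rwhisk D (ncmp \<theta> X) (ncmp \<mu> X)) (comp1 D (comp1 D (ncmp \<mu> X) (ncmp \<alpha> X)) (ncmp \<mu> X))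
     (comp1 D (id1 D (F0 G X)) (ncmp \<mu> X))" using D.rw_arr[OF c(2) ma c(4)] .
  thus "arr2 D (rwhisk D (ncmp \<theta> X) (ncmp \<mu> X)) (comp1 D (ncmp \<mu> X) (comp1 D (ncmp \<alpha> X) (ncmp \<mu> X)))
     (comp1 D (ncmp \<mu> X) (id1 D (F0 F X)))"
    using D.comp_assoc[OF c(2) c(3) c(2)] D.comp_id_l[OF c(2)] D.comp_id_r[OF c(2)] by simp
  show "inv2 D (rwhisk D (ncmp \<theta> X) (ncmp \<mu> X))" using D.rw_inv[OF c(2) ma c(4) c(5)] .
qed

lemma exR: assumes X: "X \<in> Obj C"
  shows "\<exists>!\<rho>. arr2 D \<rho> (comp1 D (ncmp \<alpha> X) (ncmp \<mu> X)) (id1 D (F0 F X)) \<and>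
    inv2 D \<rho> \<and> lwhisk D (ncmp \<mu> X) \<rho> = rwhisk D (ncmp \<theta> X) (ncmp \<mu> X)"
proof -
  note c = cR[OF X]
  have h: "F0 F X \<in> Obj D" using fobj[OF funsR(1) X] .
  show ?thesis using CRE[OF c(1) c(2) D.comp_arr[OF c(2) c(3)] D.id1_arr[OF h] PsiR[OF X]] .
qed

definition "RR X = RRc \<mu> \<alpha> \<theta> F X"
lemma RR: "X \<in> Obj C \<Longrightarrow> arr2 D (RR X) (comp1 D (ncmp \<alpha> X) (ncmp \<mu> X)) (id1 D (F0 F X)) \<and>
    inv2 D (RR X) \<and> lwhisk D (ncmp \<mu> X) (RR X) = rwhisk D (ncmp \<theta> X) (ncmp \<mu> X)"
  unfolding RR_def RRc_def by (rule theI'[OF exR])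

definition "Rh = (comp1 FC \<alpha> \<mu>, id1 FC F, \<lambda>X\<in>Obj C. RR X)"

lemma Rh_mod: "modification C D Rh"
  unfolding modification_iff Rh_def
proof (intro conjI allI impI ballI)
  show "twonatural C D (nsrc (comp1 FC \<alpha> \<mu>, id1 FC F, \<lambda>X\<in>Obj C. RR X))"
    using comp_nat[OF natsR(1,2)] natsR by simp
  show "twonatural C D (ntgt (comp1 FC \<alpha> \<mu>, id1 FC F, \<lambda>X\<in>Obj C. RR X))"
    using id_nat[OF funsR(1)] by simp
  show "nsrc (nsrc (comp1 FC \<alpha> \<mu>, id1 FC F, \<lambda>X\<in>Obj C. RR X)) = nsrc (ntgt (comp1 FC \<alpha> \<mu>, id1 FC F, \<lambda>X\<in>Obj C. RR X))"
    "ntgt (nsrc (comp1 FC \<alpha> \<mu>, id1 FC F, \<lambda>X\<in>Obj C. RR X)) = ntgt (ntgt (comp1 FC \<alpha> \<mu>, id1 FC F, \<lambda>X\<in>Obj C. RR X))"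
    using natsR by simp_all
  show "ncmp (comp1 FC \<alpha> \<mu>, id1 FC F, \<lambda>X\<in>Obj C. RR X) \<in> extensional (Obj C)" by simp
next
  fix X assume X: "X \<in> Obj C"
  show "arr2 D (ncmp (comp1 FC \<alpha> \<mu>, id1 FC F, \<lambda>X\<in>Obj C. RR X) X) (ncmp (nsrc (comp1 FC \<alpha> \<mu>, id1 FC F, \<lambda>X\<in>Obj C. RR X)) X)
     (ncmp (ntgt (comp1 FC \<alpha> \<mu>, id1 FC F, \<lambda>X\<in>Obj C. RR X)) X)" using RR[OF X] X by simp
next
  fix f X Y assume f: "arr1 C f X Y"
  have X: "X \<in> Obj C" and Y: "Y \<in> Obj C" using Carr1 f by auto
  have Ff: "arr1 D (F1 F f) (F0 F X) (F0 F Y)" using farr1[OF funsR(1) f] .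
  have Gf: "arr1 D (F1 G f) (F0 G X) (F0 G Y)" using farr1[OF funsR(2) f] .
  note cX = cR[OF X] and cY = cR[OF Y]
  note RX = RR[OF X] and RY = RR[OF Y]
  have amX: "arr1 D (comp1 D (ncmp \<alpha> X) (ncmp \<mu> X)) (F0 F X) (F0 F X)" using D.comp_arr[OF cX(2) cX(3)] .
  have amY: "arr1 D (comp1 D (ncmp \<alpha> Y) (ncmp \<mu> Y)) (F0 F Y) (F0 F Y)" using D.comp_arr[OF cY(2) cY(3)] .
  have maX: "arr1 D (comp1 D (ncmp \<mu> X) (ncmp \<alpha> X)) (F0 G X) (F0 G X)" using D.comp_arr[OF cX(3) cX(2)] .
  have maY: "arr1 D (comp1 D (ncmp \<mu> Y) (ncmp \<alpha> Y)) (F0 G Y) (F0 G Y)" using D.comp_arr[OF cY(3) cY(2)] .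
  have hF: "F0 F X \<in> Obj D" "F0 F Y \<in> Obj D" using fobj[OF funsR(1)] X Y by auto
  have mn: "comp1 D (F1 G f) (ncmp \<mu> X) = comp1 D (ncmp \<mu> Y) (F1 F f)" using nnat[OF natsR(1) f] natsR by simp
  have amn: "comp1 D (F1 F f) (comp1 D (ncmp \<alpha> X) (ncmp \<mu> X)) = comp1 D (comp1 D (ncmp \<alpha> Y) (ncmp \<mu> Y)) (F1 F f)"
    using nnat[OF comp_nat[OF natsR(1,2)] f] natsR X Y by simp
  have tn: "lwhisk D (F1 G f) (ncmp \<theta> X) = rwhisk D (ncmp \<theta> Y) (F1 G f)"
    using mnat[OF thmod(1) f] thmod natsR by simp
  have L: "arr2 D (lwhisk D (F1 F f) (RR X)) (comp1 D (F1 F f) (comp1 D (ncmp \<alpha> X) (ncmp \<mu> X))) (F1 F f)"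
    using D.lw_arr[OF amX Ff, of "RR X" "id1 D (F0 F X)"] RX D.comp_id_r[OF Ff] by simp
  have R: "arr2 D (rwhisk D (RR Y) (F1 F f)) (comp1 D (F1 F f) (comp1 D (ncmp \<alpha> X) (ncmp \<mu> X))) (F1 F f)"
    using D.rw_arr[OF Ff amY, of "RR Y" "id1 D (F0 F Y)"] RY D.comp_id_l[OF Ff] amn by simp
  have "lwhisk D (ncmp \<mu> Y) (lwhisk D (F1 F f) (RR X)) = lwhisk D (ncmp \<mu> Y) (rwhisk D (RR Y) (F1 F f))"
  proof -
    have "lwhisk D (ncmp \<mu> Y) (lwhisk D (F1 F f) (RR X)) = lwhisk D (comp1 D (ncmp \<mu> Y) (F1 F f)) (RR X)"
      using D.lw_lw[OF amX Ff cY(2), of "RR X" "id1 D (F0 F X)"] RX by simp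
    also have "\<dots> = lwhisk D (comp1 D (F1 G f) (ncmp \<mu> X)) (RR X)" using mn by simp
    also have "\<dots> = lwhisk D (F1 G f) (lwhisk D (ncmp \<mu> X) (RR X))"
      using D.lw_lw[OF amX cX(2) Gf, of "RR X" "id1 D (F0 F X)"] RX by simp
    also have "\<dots> = lwhisk D (F1 G f) (rwhisk D (ncmp \<theta> X) (ncmp \<mu> X))" using RX by simp
    also have "\<dots> = rwhisk D (lwhisk D (F1 G f) (ncmp \<theta> X)) (ncmp \<mu> X)"
      using D.lw_rw[OF cX(2) maX Gf cX(4)] .
    also have "\<dots> = rwhisk D (rwhisk D (ncmp \<theta> Y) (F1 G f)) (ncmp \<mu> X)" using tn by simp
    also have "\<dots> = rwhisk D (ncmp \<theta> Y) (comp1 D (F1 G f) (ncmp \<mu> X))" using D.rw_rw[OF cX(2) Gf maY cY(4)] .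
    also have "\<dots> = rwhisk D (ncmp \<theta> Y) (comp1 D (ncmp \<mu> Y) (F1 F f))" using mn by simp
    also have "\<dots> = rwhisk D (rwhisk D (ncmp \<theta> Y) (ncmp \<mu> Y)) (F1 F f)" using D.rw_rw[OF Ff cY(2) maY cY(4)] by simp
    also have "\<dots> = rwhisk D (lwhisk D (ncmp \<mu> Y) (RR Y)) (F1 F f)" using RY by simp
    also have "\<dots> = lwhisk D (ncmp \<mu> Y) (rwhisk D (RR Y) (F1 F f))"
      using D.lw_rw[OF Ff amY cY(2), of "RR Y" "id1 D (F0 F Y)"] RY by simp
    finally show ?thesis .
  qed
  hence "lwhisk D (F1 F f) (RR X) = rwhisk D (RR Y) (F1 F f)"
    using MONO[OF cY(1) cY(2) D.comp_arr[OF amX Ff] Ff L R] by simp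
  thus "lwhisk D (F1 (ntgt (nsrc (comp1 FC \<alpha> \<mu>, id1 FC F, \<lambda>X\<in>Obj C. RR X))) f) (ncmp (comp1 FC \<alpha> \<mu>, id1 FC F, \<lambda>X\<in>Obj C. RR X) X) =
         rwhisk D (ncmp (comp1 FC \<alpha> \<mu>, id1 FC F, \<lambda>X\<in>Obj C. RR X) Y) (F1 (nsrc (nsrc (comp1 FC \<alpha> \<mu>, id1 FC F, \<lambda>X\<in>Obj C. RR X))) f)"
    using X Y natsR by simp
qed

lemma rigid_FC: "iso2cells FC (comp1 FC \<alpha> \<mu>) (id1 FC F)"
  unfolding iso2cells_def
proof (intro exI conjI)
  show "arr2 FC Rh (comp1 FC \<alpha> \<mu>) (id1 FC F)" using Rh_mod by (simp add: fc_arr2 Rh_def del: fc_simps)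
  show "inv2 FC Rh" using D_inv2_FC[OF Rh_mod] RR by (simp add: Rh_def)
qed

end

lemma fact_FC: assumes a: "twonatural C D a"
  shows "\<exists>e\<in>pointwise C D E. \<exists>m\<in>pointwise C D M. tgt1 FC e = src1 FC m \<and> a = comp1 FC m e"
proof -
  have "\<forall>X\<in>Obj C. \<exists>e. \<exists>m. e \<in> E \<and> m \<in> M \<and> tgt1 D e = src1 D m \<and> ncmp a X = comp1 D m e"
    using EF5 narr[OF a] D.arr1_Hom by blast
  then obtain ee where "\<forall>X\<in>Obj C. \<exists>m. ee X \<in> E \<and> m \<in> M \<and> tgt1 D (ee X) = src1 D m \<and> ncmp a X = comp1 D m (ee X)"
    by (metis bchoice)
  then obtain mm where ch: "\<forall>X\<in>Obj C. ee X \<in> E \<and> mm X \<in> M \<and> tgt1 D (ee X) = src1 D (mm X) \<and> ncmp a X = comp1 D (mm X) (ee X)"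
    by (metis bchoice)
  show ?thesis
  proof (intro bexI conjI)
    show "(nsrc a, Hf a ee mm, \<lambda>X\<in>Obj C. ee X) \<in> pointwise C D E"
      using e_nat[OF a ch] ch unfolding pointwise_def by auto
    show "(Hf a ee mm, ntgt a, \<lambda>X\<in>Obj C. mm X) \<in> pointwise C D M"
      using m_nat[OF a ch] ch unfolding pointwise_def by auto
    show "tgt1 FC (nsrc a, Hf a ee mm, \<lambda>X\<in>Obj C. ee X) = src1 FC (Hf a ee mm, ntgt a, \<lambda>X\<in>Obj C. mm X)" by simp
    show "a = comp1 FC (Hf a ee mm, ntgt a, \<lambda>X\<in>Obj C. mm X) (nsrc a, Hf a ee mm, \<lambda>X\<in>Obj C. ee X)"
      using fact_eq[OF a ch] .
  qed
qed

lemma iso_pw: "{f. iso1 FC f} \<subseteq> pointwise C D E" "{f. iso1 FC f} \<subseteq> pointwise C D M"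
proof -
  { fix f assume f: "iso1 FC f"
    have n: "twonatural C D f" using f unfolding iso1_def by simp
    have "\<forall>X\<in>Obj C. iso1 D (ncmp f X)" using iso1_comp[OF f] by blast
    hence "f \<in> pointwise C D E \<and> f \<in> pointwise C D M" using n EF3 EF4 unfolding pointwise_def by blast }
  thus "{f. iso1 FC f} \<subseteq> pointwise C D E" "{f. iso1 FC f} \<subseteq> pointwise C D M" by blast+
qed

lemma main: "rigid_enhanced_fs FC (pointwise C D E) (pointwise C D M)"
proof -
  have s1: "pointwise C D E \<subseteq> Hom1 FC" and s2: "pointwise C D M \<subseteq> Hom1 FC" unfolding pointwise_def by auto
  have i: "\<forall>a\<in>Hom1 FC. \<exists>e\<in>pointwise C D E. \<exists>m\<in>pointwise C D M. tgt1 FC e = src1 FC m \<and> a = comp1 FC m e"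
    using fact_FC by simp
  have ii: "\<forall>\<epsilon>\<in>pointwise C D E. \<forall>\<mu>\<in>pointwise C D M. \<forall>F F' G G' \<alpha> \<alpha>' \<Psi>.
       arr1 FC \<epsilon> F F' \<longrightarrow> arr1 FC \<mu> G G' \<longrightarrow> arr1 FC \<alpha> F G \<longrightarrow> arr1 FC \<alpha>' F' G' \<longrightarrow>
       arr2 FC \<Psi> (comp1 FC \<alpha>' \<epsilon>) (comp1 FC \<mu> \<alpha>) \<longrightarrow> inv2 FC \<Psi> \<longrightarrow>
       (\<exists>!(\<delta>, \<Psi>t). arr1 FC \<delta> F' G \<and> arr2 FC \<Psi>t \<alpha>' (comp1 FC \<mu> \<delta>) \<and> inv2 FC \<Psi>t \<and>
                     comp1 FC \<delta> \<epsilon> = \<alpha> \<and> rwhisk FC \<Psi>t \<epsilon> = \<Psi>) \<and>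
       (\<Psi> = id2 FC (comp1 FC \<alpha>' \<epsilon>) \<longrightarrow>
          (\<forall>\<delta> \<Psi>t. arr1 FC \<delta> F' G \<and> arr2 FC \<Psi>t \<alpha>' (comp1 FC \<mu> \<delta>) \<and> inv2 FC \<Psi>t \<and>
                     comp1 FC \<delta> \<epsilon> = \<alpha> \<and> rwhisk FC \<Psi>t \<epsilon> = \<Psi> \<longrightarrow>
                     comp1 FC \<mu> \<delta> = \<alpha>' \<and> \<Psi>t = id2 FC \<alpha>'))"
  proof (intro ballI allI impI)
    fix \<epsilon> \<mu> F F' G G' \<alpha> \<alpha>' \<Psi>
    assume "\<epsilon> \<in> pointwise C D E" "\<mu> \<in> pointwise C D M" "arr1 FC \<epsilon> F F'" "arr1 FC \<mu> G G'" "arr1 FC \<alpha> F G"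
      "arr1 FC \<alpha>' F' G'" "arr2 FC \<Psi> (comp1 FC \<alpha>' \<epsilon>) (comp1 FC \<mu> \<alpha>)" "inv2 FC \<Psi>"
    note A = this
    show "(\<exists>!(\<delta>, \<Psi>t). arr1 FC \<delta> F' G \<and> arr2 FC \<Psi>t \<alpha>' (comp1 FC \<mu> \<delta>) \<and> inv2 FC \<Psi>t \<and>
                     comp1 FC \<delta> \<epsilon> = \<alpha> \<and> rwhisk FC \<Psi>t \<epsilon> = \<Psi>) \<and>
       (\<Psi> = id2 FC (comp1 FC \<alpha>' \<epsilon>) \<longrightarrow>
          (\<forall>\<delta> \<Psi>t. arr1 FC \<delta> F' G \<and> arr2 FC \<Psi>t \<alpha>' (comp1 FC \<mu> \<delta>) \<and> inv2 FC \<Psi>t \<and>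
                     comp1 FC \<delta> \<epsilon> = \<alpha> \<and> rwhisk FC \<Psi>t \<epsilon> = \<Psi> \<longrightarrow>
                     comp1 FC \<mu> \<delta> = \<alpha>' \<and> \<Psi>t = id2 FC \<alpha>'))"
      apply (rule conjI)
       apply (rule FC_ex1[OF A])
      using FC_id[OF A] by blast
  qed
  have iii: "\<forall>\<epsilon>\<in>pointwise C D E. \<forall>\<mu>\<in>pointwise C D M. \<forall>F F' G G' \<alpha>1 \<alpha>2 \<alpha>1' \<alpha>2' \<Phi> \<Phi>' \<delta>1 \<delta>2.
       arr1 FC \<epsilon> F F' \<longrightarrow> arr1 FC \<mu> G G' \<longrightarrow>
       arr1 FC \<alpha>1 F G \<longrightarrow> arr1 FC \<alpha>2 F G \<longrightarrow> arr1 FC \<alpha>1' F' G' \<longrightarrow> arr1 FC \<alpha>2' F' G' \<longrightarrow>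
       comp1 FC \<alpha>1' \<epsilon> = comp1 FC \<mu> \<alpha>1 \<longrightarrow> comp1 FC \<alpha>2' \<epsilon> = comp1 FC \<mu> \<alpha>2 \<longrightarrow>
       arr2 FC \<Phi> \<alpha>1 \<alpha>2 \<longrightarrow> arr2 FC \<Phi>' \<alpha>1' \<alpha>2' \<longrightarrow> lwhisk FC \<mu> \<Phi> = rwhisk FC \<Phi>' \<epsilon> \<longrightarrow>
       arr1 FC \<delta>1 F' G \<longrightarrow> comp1 FC \<delta>1 \<epsilon> = \<alpha>1 \<longrightarrow> comp1 FC \<mu> \<delta>1 = \<alpha>1' \<longrightarrow>
       arr1 FC \<delta>2 F' G \<longrightarrow> comp1 FC \<delta>2 \<epsilon> = \<alpha>2 \<longrightarrow> comp1 FC \<mu> \<delta>2 = \<alpha>2' \<longrightarrow>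
       (\<exists>!\<Delta>. arr2 FC \<Delta> \<delta>1 \<delta>2 \<and> rwhisk FC \<Delta> \<epsilon> = \<Phi> \<and> lwhisk FC \<mu> \<Delta> = \<Phi>')"
  proof (intro ballI allI impI)
    fix \<epsilon> \<mu> F F' G G' \<alpha>1 \<alpha>2 \<alpha>1' \<alpha>2' \<Phi> \<Phi>' \<delta>1 \<delta>2
    assume "\<epsilon> \<in> pointwise C D E" "\<mu> \<in> pointwise C D M" "arr1 FC \<epsilon> F F'" "arr1 FC \<mu> G G'"
       "arr1 FC \<alpha>1 F G" "arr1 FC \<alpha>2 F G" "arr1 FC \<alpha>1' F' G'" "arr1 FC \<alpha>2' F' G'"
       "comp1 FC \<alpha>1' \<epsilon> = comp1 FC \<mu> \<alpha>1" "comp1 FC \<alpha>2' \<epsilon> = comp1 FC \<mu> \<alpha>2"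
       "arr2 FC \<Phi> \<alpha>1 \<alpha>2" "arr2 FC \<Phi>' \<alpha>1' \<alpha>2'" "lwhisk FC \<mu> \<Phi> = rwhisk FC \<Phi>' \<epsilon>"
       "arr1 FC \<delta>1 F' G" "comp1 FC \<delta>1 \<epsilon> = \<alpha>1" "comp1 FC \<mu> \<delta>1 = \<alpha>1'"
       "arr1 FC \<delta>2 F' G" "comp1 FC \<delta>2 \<epsilon> = \<alpha>2" "comp1 FC \<mu> \<delta>2 = \<alpha>2'"
    note A = this
    show "\<exists>!\<Delta>. arr2 FC \<Delta> \<delta>1 \<delta>2 \<and> rwhisk FC \<Delta> \<epsilon> = \<Phi> \<and> lwhisk FC \<mu> \<Delta> = \<Phi>'" using FC_iii[OF A] .
  qed
  have r: "\<forall>\<mu>\<in>pointwise C D M. \<forall>\<alpha> F G. arr1 FC \<mu> F G \<longrightarrow> arr1 FC \<alpha> G F \<longrightarrow>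
      iso2cells FC (comp1 FC \<mu> \<alpha>) (id1 FC G) \<longrightarrow> iso2cells FC (comp1 FC \<alpha> \<mu>) (id1 FC F)"
  proof (intro ballI allI impI)
    fix \<mu> \<alpha> F G
    assume h: "\<mu> \<in> pointwise C D M" "arr1 FC \<mu> F G" "arr1 FC \<alpha> G F" "iso2cells FC (comp1 FC \<mu> \<alpha>) (id1 FC G)"
    then obtain \<theta> where "arr2 FC \<theta> (comp1 FC \<mu> \<alpha>) (id1 FC G)" "inv2 FC \<theta>" unfolding iso2cells_def by blast
    thus "iso2cells FC (comp1 FC \<alpha> \<mu>) (id1 FC F)" using rigid_FC h(1-3) by blast
  qed
  show ?thesis unfolding rigid_enhanced_fs_def enhanced_fs_def rigid_def
    apply (intro conjI)
           apply (rule s1)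
          apply (rule s2)
         apply (rule iso_pw(1))
        apply (rule iso_pw(2))
       apply (rule i)
      apply (rule ii)
     apply (rule iii)
    apply (rule r)
    done
qed

end

theorem theorem2p9:
  fixes C :: "('oc,'mc,'tc) twocat" and D :: "('od,'md,'td) twocat"
    and E M :: "'md set"
  assumes "twocat C" and "twocat D"
    and "enhanced_fs D E M"
    and "separates_parallel_pairs D E M"
    and "\<forall>e\<in>E. two_epi D e" and "\<forall>m\<in>M. two_mono D m"
    and "\<forall>m\<in>M. creates_inv2 D m"
  shows "rigid_enhanced_fs (funcat C D) (pointwise C D E) (pointwise C D M)"
proof -
  interpret S C D E M
    using assms by (unfold_locales) auto
  show ?thesis by (rule main)
qed



end
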